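(* Let $\langle \Gamma,\Psi\rangle$ be a PSAT instance in propositional normal form, with $\Psi=\{P(y_i)=p_i \mid 1\le i\le k\}$. Run the following column generation procedure on it. Form the vector $p=(1,p_1,\dots,p_k)'$ with $p_1,\dots,p_k$ sorted in decreasing order. Initialize $A$ as the $(k+1)\times(k+1)$ upper triangular matrix whose entries on and above the diagonal are $1$ and whose other entries are $0$. Initialize $\pi$ by $\pi_i=p_i-p_{i+1}$ for $1\le i\le k$ and $\pi_{k+1}=p_{k+1}$, where the $p_i$ here denote the successive entries of the vector $p$. Initialize the cost vector $c\in\{0,1\}^{k+1}$ by $c_j=1$ iff column $j$ of $A$ is $\Gamma$-inconsistent. While $c'\pi>0$, repeat the following steps. 1. Solve, by the simplex method, the linear program: minimize $c'\pi$ subject to $A\pi=p$ and $\pi\ge 0$. This yields a primal solution $\pi$ and a dual solution $z=c_B B^{-1}$, where $B$ is the current basis and $c_B$ is the cost vector of the basis columns. 2. Using a SAT solver, search for a $\Gamma$-consistent $\{0,1\}$-column $y$ satisfying $z'y\ge 0$. This is done by encoding the linear inequality as a propositional formula and conjoining it with $\Gamma$. 3. If no such $y$ exists, return "No". Otherwise append $y$ as a new column of $A$, append $0$ to $c$, and let the simplex method replace an appropriate outgoing basis column. When the loop ends, return $(\pi,A)$, which satisfies $A\pi=p$ and $c'\pi=0$. Then this procedure is a decision procedure for PSAT. That is, it returns a pair $(\pi,A)$ with $A\pi=p$, $\pi\ge 0$ and total cost $c'\pi=0$ if the instance is satisfiable, and it returns "No" if the instance is unsatisfiable.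
   Context: Classical propositional logic over finitely many propositional symbols. A probability distribution over propositional valuations is a map $\pi$ from the (finitely many) valuations $v$ into $[0,1]$ whose values sum to $1$. The probability of a formula $\alpha$ under $\pi$ is $P_\pi(\alpha)=\sum\{\pi(v)\mid v(\alpha)=1\}$. A PSAT instance in propositional normal form is a pair $\langle\Gamma,\Psi\rangle$ with the following components. - $\Gamma$ is a finite set of propositional formulas, each required to have probability $1$. - $\Psi=\{P(y_i)=p_i\mid 1\le i\le k\}$, where $y_1,\dots,y_k$ are propositional symbols and $0<p_i<1$. The instance is satisfiable iff there is a probability distribution $\pi$ with $P_\pi(\gamma)=1$ for all $\gamma\in\Gamma$ and $P_\pi(y_i)=p_i$ for all $i$. Columns of $A$ are $\{0,1\}$-vectors of length $k+1$. The first entry corresponds to the constraint $\sum\pi_j=1$, and the remaining entries give values of $y_1,\dots,y_k$. A column (equivalently, a valuation over $y_1,\dots,y_k$) is $\Gamma$-consistent if it extends to a valuation over all symbols that satisfies every formula of $\Gamma$, and is $\Gamma$-inconsistent otherwise. *)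

theory Defs
  imports Complex_Main
begin

datatype 'a pform =
    PVar 'a
  | PBot
  | PNeg "'a pform"
  | PAnd "'a pform" "'a pform"
  | POr "'a pform" "'a pform"
  | PImp "'a pform" "'a pform"

fun peval :: "('a \<Rightarrow> bool) \<Rightarrow> 'a pform \<Rightarrow> bool" where
  "peval v (PVar x) = v x"
| "peval v PBot = False"
| "peval v (PNeg f) = (\<not> peval v f)"
| "peval v (PAnd f g) = (peval v f \<and> peval v g)"
| "peval v (POr f g) = (peval v f \<or> peval v g)"
| "peval v (PImp f g) = (peval v f \<longrightarrow> peval v g)"

definition prob_of :: "(('a::finite \<Rightarrow> bool) \<Rightarrow> real) \<Rightarrow> 'a pform \<Rightarrow> real" where
  "prob_of \<pi> \<alpha> = (\<Sum>v\<in>{v. peval v \<alpha>}. \<pi> v)"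

definition is_distribution :: "(('a::finite \<Rightarrow> bool) \<Rightarrow> real) \<Rightarrow> bool" where
  "is_distribution \<pi> \<longleftrightarrow> (\<forall>v. 0 \<le> \<pi> v \<and> \<pi> v \<le> 1) \<and> (\<Sum>v\<in>UNIV. \<pi> v) = 1"

definition psat_satisfiable ::
  "'a::finite pform set \<Rightarrow> (nat \<Rightarrow> 'a) \<Rightarrow> (nat \<Rightarrow> real) \<Rightarrow> nat \<Rightarrow> bool" where
  "psat_satisfiable G yv ps k \<longleftrightarrow>
     (\<exists>\<pi>. is_distribution \<pi> \<and> (\<forall>g\<in>G. prob_of \<pi> g = 1)
          \<and> (\<forall>i\<in>{1..k}. prob_of \<pi> (PVar (yv i)) = ps i))"

text \<open>Rows: row 0 is the constraint sum pi = 1, row r (1 \<le> r \<le> k) corresponds to the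
  r-th symbol in the sorted order, i.e. to \<open>yv (\<sigma> r)\<close>.\<close>

definition mat_vec :: "real list list \<Rightarrow> real list \<Rightarrow> nat \<Rightarrow> real" where
  "mat_vec A \<pi> r = (\<Sum>j<length A. (A ! j) ! r * \<pi> ! j)"

definition dotk :: "nat \<Rightarrow> real list \<Rightarrow> real list \<Rightarrow> real" where
  "dotk k u w = (\<Sum>r\<le>k. u ! r * w ! r)"

definition cost :: "real list \<Rightarrow> real list \<Rightarrow> real" where
  "cost c \<pi> = (\<Sum>j<length c. c ! j * \<pi> ! j)"

definition feasible :: "nat \<Rightarrow> real list \<Rightarrow> real list list \<Rightarrow> real list \<Rightarrow> bool" where
  "feasible k p A \<pi> \<longleftrightarrow> length \<pi> = length A \<and> (\<forall>j<length A. 0 \<le> \<pi> ! j)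
      \<and> (\<forall>r\<le>k. mat_vec A \<pi> r = p ! r)"

definition is_basis :: "nat \<Rightarrow> real list list \<Rightarrow> nat list \<Rightarrow> bool" where
  "is_basis k A B \<longleftrightarrow> length B = k + 1 \<and> distinct B \<and> set B \<subseteq> {..<length A}
     \<and> (\<forall>u::nat \<Rightarrow> real. (\<forall>r\<le>k. (\<Sum>i\<le>k. u i * (A ! (B ! i)) ! r) = 0)
                        \<longrightarrow> (\<forall>i\<le>k. u i = 0))"

definition is_bfs :: "nat \<Rightarrow> real list \<Rightarrow> real list list \<Rightarrow> nat list \<Rightarrow> real list \<Rightarrow> bool" where
  "is_bfs k p A B \<pi> \<longleftrightarrow> is_basis k A B \<and> feasible k p A \<pi>
     \<and> (\<forall>j<length A. j \<notin> set B \<longrightarrow> \<pi> ! j = 0)"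

text \<open>Output of the simplex method on  min c'pi  s.t.  A pi = p, pi \<ge> 0 :
  an optimal basis B with basic solution pi and dual z = c_B B^{-1}
  (i.e. z'B_i = c_{B_i} for every basis column), optimality meaning that all
  reduced costs c_j - z'A_j are nonnegative.\<close>
definition simplex_result ::
  "nat \<Rightarrow> real list \<Rightarrow> real list list \<Rightarrow> real list \<Rightarrow> nat list \<Rightarrow> real list \<Rightarrow> real list \<Rightarrow> bool" where
  "simplex_result k p A c B \<pi> z \<longleftrightarrow> is_bfs k p A B \<pi> \<and> length z = k + 1
     \<and> (\<forall>i\<le>k. dotk k z (A ! (B ! i)) = c ! (B ! i))
     \<and> (\<forall>j<length A. dotk k z (A ! j) \<le> c ! j)"

definition gamma_consistent ::
  "'a pform set \<Rightarrow> (nat \<Rightarrow> 'a) \<Rightarrow> (nat \<Rightarrow> nat) \<Rightarrow> nat \<Rightarrow> real list \<Rightarrow> bool" where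
  "gamma_consistent G yv \<sigma> k col \<longleftrightarrow>
     (\<exists>v. (\<forall>g\<in>G. peval v g) \<and> (\<forall>r\<in>{1..k}. v (yv (\<sigma> r)) = (col ! r = 1)))"

text \<open>A {0,1}-column of A (first entry 1, for the constraint sum pi = 1).\<close>
definition is_column :: "nat \<Rightarrow> real list \<Rightarrow> bool" where
  "is_column k col \<longleftrightarrow> length col = k + 1 \<and> col ! 0 = 1 \<and> (\<forall>r\<le>k. col ! r \<in> {0, 1})"

definition pvec :: "(nat \<Rightarrow> real) \<Rightarrow> (nat \<Rightarrow> nat) \<Rightarrow> nat \<Rightarrow> real list" where
  "pvec ps \<sigma> k = 1 # map (\<lambda>i. ps (\<sigma> i)) [1..<k+1]"

definition A_init :: "nat \<Rightarrow> real list list" where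
  "A_init k = map (\<lambda>j. map (\<lambda>r. if r \<le> j then 1 else 0) [0..<k+1]) [0..<k+1]"

definition pi_init :: "nat \<Rightarrow> real list \<Rightarrow> real list" where
  "pi_init k p = map (\<lambda>j. if j < k then p ! j - p ! (Suc j) else p ! k) [0..<k+1]"

definition c_init ::
  "'a pform set \<Rightarrow> (nat \<Rightarrow> 'a) \<Rightarrow> (nat \<Rightarrow> nat) \<Rightarrow> nat \<Rightarrow> real list" where
  "c_init G yv \<sigma> k = map (\<lambda>col. if gamma_consistent G yv \<sigma> k col then 0 else 1) (A_init k)"

text \<open>States: running with (A, c, pi); returned (A, c, pi) (the output is (pi, A));
  returned "No".\<close>
datatype cg_state = Running "real list list" "real list" "real list"
  | Returned "real list list" "real list" "real list"
  | Answer_No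

definition cg_init ::
  "'a pform set \<Rightarrow> (nat \<Rightarrow> 'a) \<Rightarrow> (nat \<Rightarrow> real) \<Rightarrow> (nat \<Rightarrow> nat) \<Rightarrow> nat \<Rightarrow> cg_state" where
  "cg_init G yv ps \<sigma> k =
     Running (A_init k) (c_init G yv \<sigma> k) (pi_init k (pvec ps \<sigma> k))"

text \<open>One iteration of the while loop (nondeterministic: any simplex outcome, any
  column returned by the SAT solver, any admissible pivot).\<close>
inductive cg_step ::
  "'a pform set \<Rightarrow> (nat \<Rightarrow> 'a) \<Rightarrow> (nat \<Rightarrow> real) \<Rightarrow> (nat \<Rightarrow> nat) \<Rightarrow> nat \<Rightarrow> cg_state \<Rightarrow> cg_state \<Rightarrow> bool"
  for G yv ps \<sigma> k where
  stop: "\<not> cost c \<pi> > 0 \<Longrightarrow> cg_step G yv ps \<sigma> k (Running A c \<pi>) (Returned A c \<pi>)"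
| opt_zero: "cost c \<pi> > 0 \<Longrightarrow> simplex_result k (pvec ps \<sigma> k) A c B \<pi>1 z
       \<Longrightarrow> \<not> cost c \<pi>1 > 0
       \<Longrightarrow> cg_step G yv ps \<sigma> k (Running A c \<pi>) (Returned A c \<pi>1)"
| no: "cost c \<pi> > 0 \<Longrightarrow> simplex_result k (pvec ps \<sigma> k) A c B \<pi>1 z
       \<Longrightarrow> cost c \<pi>1 > 0
       \<Longrightarrow> \<not> (\<exists>y. is_column k y \<and> gamma_consistent G yv \<sigma> k y \<and> dotk k z y > 0)
       \<Longrightarrow> cg_step G yv ps \<sigma> k (Running A c \<pi>) Answer_No"
| add: "cost c \<pi> > 0 \<Longrightarrow> simplex_result k (pvec ps \<sigma> k) A c B \<pi>1 z
       \<Longrightarrow> cost c \<pi>1 > 0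
       \<Longrightarrow> is_column k y \<Longrightarrow> gamma_consistent G yv \<sigma> k y \<Longrightarrow> dotk k z y > 0
       \<Longrightarrow> l \<le> k \<Longrightarrow> is_bfs k (pvec ps \<sigma> k) (A @ [y]) (B[l := length A]) \<pi>2
       \<Longrightarrow> cg_step G yv ps \<sigma> k (Running A c \<pi>) (Running (A @ [y]) (c @ [0]) \<pi>2)"

definition cg_final :: "cg_state \<Rightarrow> bool" where
  "cg_final s \<longleftrightarrow> (case s of Running _ _ _ \<Rightarrow> False | _ \<Rightarrow> True)"

end

theory Submission
  imports Defs "HOL-Library.Function_Algebras"
begin

definition fscale :: "real \<Rightarrow> (nat \<Rightarrow> real) \<Rightarrow> (nat \<Rightarrow> real)" where
  "fscale c f = (\<lambda>x. c * f x)"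

interpretation fvs: vector_space fscale
  by unfold_locales (auto simp: fscale_def fun_eq_iff algebra_simps)

lemma fscale_sum_app: "(\<Sum>v\<in>S. fscale (g v) (h v)) x = (\<Sum>v\<in>S. g v * h v x)"
  by (induction S rule: infinite_finite_induct) (auto simp: fscale_def)

lemma span_lemma:
  fixes V :: "nat \<Rightarrow> nat \<Rightarrow> real"
  assumes indep: "\<forall>u::nat \<Rightarrow> real. (\<forall>r\<le>k. (\<Sum>i\<le>k. u i * V i r) = 0) \<longrightarrow> (\<forall>i\<le>k. u i = 0)"
  shows "\<exists>u. \<forall>r\<le>k. (\<Sum>i\<le>k. u i * V i r) = b r"
proof -
  define W where "W i = (\<lambda>r. if r \<le> k then V i r else 0)" for i
  define E where "E r = (\<lambda>x::nat. if x = r then (1::real) else 0)" for r :: nat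
  define S where "S = W ` {..k}"
  define T where "T = E ` {..k}"
  define b' where "b' = (\<lambda>r. if r \<le> k then b r else 0)"
  have injW: "inj_on W {..k}"
  proof (rule inj_onI)
    fix i j assume ij: "i \<in> {..k}" "j \<in> {..k}" "W i = W j"
    show "i = j"
    proof (rule ccontr)
      assume ne: "i \<noteq> j"
      define u where "u x = (if x = i then (1::real) else if x = j then -1 else 0)" for x
      have "\<forall>r\<le>k. (\<Sum>x\<le>k. u x * V x r) = 0"
      proof (intro allI impI)
        fix r assume r: "r \<le> k"
        have "V i r = V j r" using ij(3) r unfolding W_def by (metis (mono_tags))
        have "(\<Sum>x\<le>k. u x * V x r) = (\<Sum>x\<in>{i,j}. u x * V x r)"
          by (rule sum.mono_neutral_right) (use ij in \<open>auto simp: u_def\<close>)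
        also have "\<dots> = 0" using ne \<open>V i r = V j r\<close> by (simp add: u_def)
        finally show "(\<Sum>x\<le>k. u x * V x r) = 0" .
      qed
      with indep ij have "u i = 0" by auto
      then show False by (simp add: u_def)
    qed
  qed
  have cardS: "card S = k + 1" unfolding S_def using card_image[OF injW] by simp
  have finS: "finite S" unfolding S_def by simp
  have indS: "fvs.independent S"
  proof
    assume "fvs.dependent S"
    then obtain u where u: "\<exists>v\<in>S. u v \<noteq> 0" "(\<Sum>v\<in>S. fscale (u v) v) = 0"
      using fvs.dependent_finite[OF finS] by blast
    have "(\<Sum>v\<in>S. fscale (u v) v) = (\<Sum>i\<le>k. fscale (u (W i)) (W i))"
      unfolding S_def by (rule sum.reindex[OF injW, unfolded comp_def])
    with u(2) have z: "(\<Sum>i\<le>k. fscale (u (W i)) (W i)) = 0" by simp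
    have "\<forall>r\<le>k. (\<Sum>i\<le>k. u (W i) * V i r) = 0"
    proof (intro allI impI)
      fix r assume r: "r \<le> k"
      have "(\<Sum>i\<le>k. fscale (u (W i)) (W i)) r = 0" using z by simp
      then show "(\<Sum>i\<le>k. u (W i) * V i r) = 0" using r
        by (simp add: fscale_sum_app W_def)
    qed
    then have "\<forall>i\<le>k. u (W i) = 0" using indep[rule_format, of "\<lambda>i. u (W i)"] by simp
    with u(1) show False unfolding S_def by auto
  qed
  have spT: "\<And>f. (\<forall>x>k. f x = 0) \<Longrightarrow> f \<in> fvs.span T"
  proof -
    fix f :: "nat \<Rightarrow> real" assume f: "\<forall>x>k. f x = 0"
    have "f = (\<Sum>r\<le>k. fscale (f r) (E r))"
    proof
      fix x
      show "f x = (\<Sum>r\<le>k. fscale (f r) (E r)) x"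
      proof (cases "x \<le> k")
        case True
        then show ?thesis by (simp add: fscale_sum_app E_def if_distrib sum.delta sum.delta' cong: if_cong)
      next
        case False
        then show ?thesis using f by (simp add: fscale_sum_app E_def)
      qed
    qed
    also have "\<dots> \<in> fvs.span T"
      by (rule fvs.span_sum) (auto simp: T_def intro: fvs.span_scale fvs.span_base)
    finally show "f \<in> fvs.span T" .
  qed
  have "b' \<in> fvs.span S"
  proof (rule ccontr)
    assume nb: "b' \<notin> fvs.span S"
    then have ind2: "fvs.independent (insert b' S)" using fvs.independent_insertI indS by blast
    have "insert b' S \<subseteq> fvs.span T"
      using spT by (auto simp: b'_def S_def W_def)
    then have "card (insert b' S) \<le> card T"
      using fvs.independent_span_bound[OF _ ind2] by (simp add: T_def)
    moreover have "card T \<le> k + 1" unfolding T_def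
      using card_image_le[of "{..k}" E] by simp
    moreover have "b' \<notin> S" using nb fvs.span_base by blast
    ultimately show False using cardS finS by simp
  qed
  then obtain u where u: "b' = (\<Sum>v\<in>S. fscale (u v) v)"
    using fvs.span_finite[OF finS] by auto
  have "(\<Sum>v\<in>S. fscale (u v) v) = (\<Sum>i\<le>k. fscale (u (W i)) (W i))"
    unfolding S_def by (rule sum.reindex[OF injW, unfolded comp_def])
  show ?thesis
  proof (intro exI allI impI)
    fix r assume r: "r \<le> k"
    have "b r = b' r" using r by (simp add: b'_def)
    also have "\<dots> = (\<Sum>i\<le>k. fscale (u (W i)) (W i)) r"
      using u \<open>(\<Sum>v\<in>S. fscale (u v) v) = _\<close> by simp
    also have "\<dots> = (\<Sum>i\<le>k. u (W i) * V i r)" using r by (simp add: fscale_sum_app W_def)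
    finally show "(\<Sum>i\<le>k. u (W i) * V i r) = b r" by simp
  qed
qed


definition rep :: "nat \<Rightarrow> real list list \<Rightarrow> nat list \<Rightarrow> (nat \<Rightarrow> real) \<Rightarrow> (nat \<Rightarrow> real) \<Rightarrow> bool" where
  "rep k A B u b \<longleftrightarrow> (\<forall>r\<le>k. (\<Sum>i\<le>k. u i * A ! (B ! i) ! r) = b r)"

definition co :: "nat \<Rightarrow> real list list \<Rightarrow> nat list \<Rightarrow> (nat \<Rightarrow> real) \<Rightarrow> nat \<Rightarrow> real" where
  "co k A B b = (SOME u. rep k A B u b)"

lemma basis_indep:
  assumes "is_basis k A B" "\<And>r. r \<le> k \<Longrightarrow> (\<Sum>i\<le>k. u i * A ! (B ! i) ! r) = 0" "i \<le> k"
  shows "u i = 0"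
proof -
  from assms(1) have "\<forall>u::nat\<Rightarrow>real. (\<forall>r\<le>k. (\<Sum>i\<le>k. u i * A ! (B ! i) ! r) = 0) \<longrightarrow> (\<forall>i\<le>k. u i = 0)"
    by (simp add: is_basis_def)
  then have "(\<forall>r\<le>k. (\<Sum>i\<le>k. u i * A ! (B ! i) ! r) = 0) \<longrightarrow> (\<forall>i\<le>k. u i = 0)"
    by (rule spec)
  moreover have "\<forall>r\<le>k. (\<Sum>i\<le>k. u i * A ! (B ! i) ! r) = 0" using assms(2) by simp
  ultimately have "\<forall>i\<le>k. u i = 0" by (rule mp)
  then show ?thesis using assms(3) by simp
qed

lemma co_rep:
  assumes "is_basis k A B" shows "rep k A B (co k A B b) b"
proof -
  have "\<forall>u::nat\<Rightarrow>real. (\<forall>r\<le>k. (\<Sum>i\<le>k. u i * A ! (B ! i) ! r) = 0) \<longrightarrow> (\<forall>i\<le>k. u i = 0)"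
    using assms by (simp add: is_basis_def)
  then have "\<exists>u. rep k A B u b" unfolding rep_def by (rule span_lemma)
  then show ?thesis unfolding co_def by (rule someI_ex)
qed

lemma rep_unique:
  assumes "is_basis k A B" "rep k A B u b" "rep k A B u' b" "i \<le> k"
  shows "u i = u' i"
proof -
  have "(\<lambda>i. u i - u' i) i = 0"
  proof (rule basis_indep[OF assms(1) _ assms(4)])
    fix r assume r: "r \<le> k"
    have "(\<Sum>i\<le>k. u i * A ! (B ! i) ! r) = b r" "(\<Sum>i\<le>k. u' i * A ! (B ! i) ! r) = b r"
      using assms(2,3) r unfolding rep_def by auto
    then show "(\<Sum>i\<le>k. (u i - u' i) * A ! (B ! i) ! r) = 0"
      by (simp add: sum_subtractf left_diff_distrib)
  qed
  then show ?thesis by simp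
qed

lemma co_eq: "is_basis k A B \<Longrightarrow> rep k A B u b \<Longrightarrow> i \<le> k \<Longrightarrow> co k A B b i = u i"
  using rep_unique co_rep by blast

lemma co_cong: "(\<And>r. r \<le> k \<Longrightarrow> b r = b' r) \<Longrightarrow> co k A B b = co k A B b'"
  unfolding co_def rep_def by simp

lemma ite01_mult: "(if P then 1 else 0) * (x::real) = (if P then x else 0)"
  by simp

lemma co_basis_col:
  assumes "is_basis k A B" "m \<le> k" "i \<le> k"
  shows "co k A B (\<lambda>r. A ! (B ! m) ! r) i = (if i = m then 1 else 0)"
proof -
  have "rep k A B (\<lambda>i. if i = m then 1 else 0) (\<lambda>r. A ! (B ! m) ! r)"
    using assms(2) by (simp add: rep_def ite01_mult sum.delta)
  then show ?thesis using co_eq assms by blast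
qed

lemma co_lin:
  assumes "is_basis k A B" "finite M" "i \<le> k"
  shows "co k A B (\<lambda>r. \<Sum>m\<in>M. t m * f m r) i = (\<Sum>m\<in>M. t m * co k A B (f m) i)"
proof -
  have "rep k A B (\<lambda>i. \<Sum>m\<in>M. t m * co k A B (f m) i) (\<lambda>r. \<Sum>m\<in>M. t m * f m r)"
    unfolding rep_def
  proof (intro allI impI)
    fix r assume r: "r \<le> k"
    have "(\<Sum>i\<le>k. (\<Sum>m\<in>M. t m * co k A B (f m) i) * A ! (B ! i) ! r)
        = (\<Sum>m\<in>M. t m * (\<Sum>i\<le>k. co k A B (f m) i * A ! (B ! i) ! r))"
      by (simp add: sum_distrib_left sum_distrib_right mult.assoc sum.swap[of _ M])
    also have "\<dots> = (\<Sum>m\<in>M. t m * f m r)"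
      using co_rep[OF assms(1)] r by (simp add: rep_def)
    finally show "(\<Sum>i\<le>k. (\<Sum>m\<in>M. t m * co k A B (f m) i) * A ! (B ! i) ! r) = (\<Sum>m\<in>M. t m * f m r)" .
  qed
  then show ?thesis using co_eq assms by blast
qed

definition lexpos :: "nat \<Rightarrow> (nat \<Rightarrow> real) \<Rightarrow> bool" where
  "lexpos K v \<longleftrightarrow> (\<exists>m\<le>K. (\<forall>m'<m. v m' = 0) \<and> 0 < v m)"

lemma lexpos_add:
  assumes "lexpos K v" "lexpos K w"
  shows "lexpos K (\<lambda>m. v m + w m)"
proof -
  obtain m1 where m1: "m1 \<le> K" "\<forall>m'<m1. v m' = 0" "0 < v m1" using assms(1) lexpos_def by blast
  obtain m2 where m2: "m2 \<le> K" "\<forall>m'<m2. w m' = 0" "0 < w m2" using assms(2) lexpos_def by blast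
  show ?thesis unfolding lexpos_def
  proof (cases "m1 < m2")
    case True then show "\<exists>m\<le>K. (\<forall>m'<m. v m' + w m' = 0) \<and> 0 < v m + w m"
      using m1 m2 by (intro exI[of _ m1]) auto
  next
    case False then show "\<exists>m\<le>K. (\<forall>m'<m. v m' + w m' = 0) \<and> 0 < v m + w m"
      using m1 m2 by (intro exI[of _ m2]) (cases "m1 = m2"; auto)
  qed
qed

lemma lexpos_scale: "lexpos K v \<Longrightarrow> 0 < t \<Longrightarrow> lexpos K (\<lambda>m. t * v m)"
  unfolding lexpos_def by auto

lemma lexpos_nonneg0:
  assumes "lexpos K v" shows "0 \<le> v 0"
proof -
  obtain m where m: "m \<le> K" "\<forall>m'<m. v m' = 0" "0 < v m" using assms lexpos_def by blast
  show ?thesis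
  proof (cases "m = 0")
    case True then show ?thesis using m by simp
  next
    case False then show ?thesis using m by simp
  qed
qed

lemma lexpos_not_zero: "\<not> lexpos K (\<lambda>m. 0)"
  unfolding lexpos_def by auto

lemma lexpos_cong:
  assumes "lexpos K v" "\<And>m. m \<le> K \<Longrightarrow> v m = w m" shows "lexpos K w"
proof -
  obtain m where m: "m \<le> K" "\<forall>m'<m. v m' = 0" "0 < v m" using assms(1) lexpos_def by blast
  have "\<forall>m'<m. w m' = 0" using m assms(2) by simp
  then show ?thesis unfolding lexpos_def using m assms(2) by (intro exI[of _ m]) simp
qed

lemma lexpos_total:
  assumes "m0 \<le> K" "v m0 \<noteq> 0"
  shows "lexpos K v \<or> lexpos K (\<lambda>m. - v m)"
proof -
  define m where "m = (LEAST m. v m \<noteq> 0)"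
  have vm: "v m \<noteq> 0" unfolding m_def by (rule LeastI[of _ m0]) (use assms in auto)
  have mle: "m \<le> m0" unfolding m_def by (rule Least_le) (use assms in auto)
  have below: "\<forall>m'<m. v m' = 0" unfolding m_def using not_less_Least by blast
  show ?thesis
  proof (cases "v m > 0")
    case True then show ?thesis unfolding lexpos_def using below mle assms(1)
      by (intro disjI1 exI[of _ m]) auto
  next
    case False then show ?thesis unfolding lexpos_def using below mle assms(1) vm
      by (intro disjI2 exI[of _ m]) auto
  qed
qed

lemma finite_minimal_rel:
  assumes "finite S" "S \<noteq> {}" "\<forall>x. \<not> R x x" "\<forall>x y z. R x y \<longrightarrow> R y z \<longrightarrow> R x z"
  shows "\<exists>m\<in>S. \<forall>x\<in>S. \<not> R x m"
  using assms(1,2)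
proof (induction S rule: finite_ne_induct)
  case (singleton x) then show ?case using assms(3) by auto
next
  case (insert x F)
  then obtain m where m: "m \<in> F" "\<forall>y\<in>F. \<not> R y m" by blast
  show ?case
  proof (cases "R x m")
    case True
    have "\<not> R y x" if y: "y \<in> insert x F" for y
    proof
      assume yx: "R y x"
      show False
      proof (cases "y = x")
        case True then show False using yx assms(3) by simp
      next
        case False
        then have "y \<in> F" using y by simp
        moreover have "R y m" using assms(4) yx \<open>R x m\<close> by blast
        ultimately show False using m by blast
      qed
    qed
    then show ?thesis by blast
  next
    case False then show ?thesis using m by blast
  qed
qed

lemma pivot_basis:
  assumes B: "is_basis k A B" and l: "l \<le> k" and j: "j < length A'" "j \<notin> set B"
    and sub: "set B \<subseteq> {..<length A'}"
    and same: "\<And>i. i \<le> k \<Longrightarrow> A' ! (B ! i) = A ! (B ! i)"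
    and d: "\<And>r. r \<le> k \<Longrightarrow> (\<Sum>i\<le>k. d i * A ! (B ! i) ! r) = A' ! j ! r" and dl: "d l \<noteq> 0"
  shows "is_basis k A' (B[l:=j])"
proof -
  have lenB: "length B = k + 1" "distinct B" using B by (auto simp: is_basis_def)
  have nth': "B[l:=j] ! i = (if i = l then j else B ! i)" if "i \<le> k" for i
    using that lenB l by (simp add: nth_list_update)
  have "\<forall>u::nat \<Rightarrow> real. (\<forall>r\<le>k. (\<Sum>i\<le>k. u i * A' ! (B[l:=j] ! i) ! r) = 0) \<longrightarrow> (\<forall>i\<le>k. u i = 0)"
  proof (intro allI impI)
    fix u :: "nat \<Rightarrow> real" and i
    assume h: "\<forall>r\<le>k. (\<Sum>i\<le>k. u i * A' ! (B[l:=j] ! i) ! r) = 0" and i: "i \<le> k"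
    define v where "v i = (if i = l then 0 else u i) + u l * d i" for i
    have "\<forall>r\<le>k. (\<Sum>i\<le>k. v i * A ! (B ! i) ! r) = 0"
    proof (intro allI impI)
      fix r assume r: "r \<le> k"
      have e1: "(\<Sum>i\<le>k. v i * A ! (B ! i) ! r)
          = (\<Sum>i\<le>k. (if i = l then 0 else u i * A ! (B ! i) ! r)) + u l * (\<Sum>i\<le>k. d i * A ! (B ! i) ! r)"
      proof -
        have "(\<Sum>i\<le>k. v i * A ! (B ! i) ! r)
           = (\<Sum>i\<le>k. (if i = l then 0 else u i * A ! (B ! i) ! r) + u l * (d i * A ! (B ! i) ! r))"
          by (rule sum.cong) (auto simp: v_def algebra_simps)
        then show ?thesis by (simp add: sum.distrib sum_distrib_left)
      qed
      have "(\<Sum>i\<le>k. u i * A' ! (B[l:=j] ! i) ! r)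
          = (\<Sum>i\<le>k. (if i = l then 0 else u i * A ! (B ! i) ! r) + (if i = l then u l * A' ! j ! r else 0))"
        by (rule sum.cong) (auto simp: nth' same)
      also have "\<dots> = (\<Sum>i\<le>k. (if i = l then 0 else u i * A ! (B ! i) ! r)) + u l * A' ! j ! r"
        using l by (simp add: sum.distrib sum.delta)
      finally show "(\<Sum>i\<le>k. v i * A ! (B ! i) ! r) = 0" using e1 d[OF r] h r by simp
    qed
    then have v0: "\<forall>i\<le>k. v i = 0" using basis_indep[OF B, of v] by blast
    then have "v l = 0" using l by blast
    then have "u l * d l = 0" by (simp add: v_def)
    then have ul: "u l = 0" using dl by simp
    show "u i = 0" using v0 i ul by (auto simp: v_def split: if_splits)
  qed
  moreover have "distinct (B[l:=j])" using lenB j(2) by (intro distinct_list_update) auto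
  moreover have "set (B[l:=j]) \<subseteq> {..<length A'}" using set_update_subset_insert[of B l j] sub j(1) by auto
  ultimately show ?thesis using lenB by (simp add: is_basis_def)
qed


lemma ind01_split:
  assumes "r \<le> k"
  shows "(\<Sum>i\<le>k. g i * (if r \<le> i then 1 else 0)) = (g r::real) + (\<Sum>i\<le>k. g i * (if Suc r \<le> i then 1 else 0))"
proof -
  have "(\<Sum>i\<le>k. g i * (if r \<le> i then 1 else 0)) = (\<Sum>i\<le>k. (if i = r then g i else 0) + g i * (if Suc r \<le> i then 1 else 0))"
    by (rule sum.cong) auto
  also have "\<dots> = g r + (\<Sum>i\<le>k. g i * (if Suc r \<le> i then 1 else 0))"
    using assms by (simp add: sum.distrib sum.delta')
  finally show ?thesis .
qed

lemma ind01_zero: "(\<Sum>i\<le>k. g i * (if Suc k \<le> i then 1 else (0::real))) = 0"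
  by (rule sum.neutral) auto

lemma telescope01:
  "r \<le> Suc k \<Longrightarrow> (\<Sum>i\<le>k. (f i - f (Suc i)) * (if r \<le> i then 1 else 0)) = f r - (f (Suc k) :: real)"
proof (induction "Suc k - r" arbitrary: r)
  case 0
  then have "r = Suc k" by simp
  then show ?case using ind01_zero[of "\<lambda>i. f i - f (Suc i)" k] by simp
next
  case (Suc x)
  then have r: "r \<le> k" by simp
  have "Suc k - Suc r = x" using Suc.hyps(2) by simp
  then have ih: "(\<Sum>i\<le>k. (f i - f (Suc i)) * (if Suc r \<le> i then 1 else 0)) = f (Suc r) - f (Suc k)"
    using Suc.hyps(1) r by simp
  show ?case using ind01_split[OF r, of "\<lambda>i. f i - f (Suc i)"] ih by simp
qed

lemma A_init_nth: "j \<le> k \<Longrightarrow> r \<le> k \<Longrightarrow> A_init k ! j ! r = (if r \<le> j then 1 else 0)"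
  unfolding A_init_def by (simp del: upt_Suc add: nth_upt less_Suc_eq_le)

lemma length_A_init: "length (A_init k) = k + 1"
  unfolding A_init_def by simp

lemma B0_nth: "i \<le> k \<Longrightarrow> [0..<k+1] ! i = i"
  by (simp del: upt_Suc add: nth_upt)

locale init_cols =
  fixes k :: nat and A :: "real list list"
  assumes lenA: "k < length A" and Ainit: "\<forall>j\<le>k. A ! j = A_init k ! j"
begin

lemma A_col: "j \<le> k \<Longrightarrow> r \<le> k \<Longrightarrow> A ! j ! r = (if r \<le> j then 1 else 0)"
  using Ainit A_init_nth by simp

lemma basis0: "is_basis k A [0..<k+1]"
proof -
  have "\<forall>u::nat\<Rightarrow>real. (\<forall>r\<le>k. (\<Sum>i\<le>k. u i * A ! ([0..<k+1] ! i) ! r) = 0) \<longrightarrow> (\<forall>i\<le>k. u i = 0)"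
  proof (intro allI impI)
    fix u :: "nat \<Rightarrow> real" and i
    assume h: "\<forall>r\<le>k. (\<Sum>i\<le>k. u i * A ! ([0..<k+1] ! i) ! r) = 0" and i: "i \<le> k"
    define S where "S r = (\<Sum>i\<le>k. u i * (if r \<le> i then 1 else 0))" for r
    have S0: "S r = 0" if "r \<le> Suc k" for r
    proof (cases "r = Suc k")
      case True then show ?thesis unfolding S_def using ind01_zero[of u k] by simp
    next
      case False
      then have r: "r \<le> k" using that by simp
      have "(\<Sum>i\<le>k. u i * A ! ([0..<k+1] ! i) ! r) = S r"
        unfolding S_def by (rule sum.cong) (use r in \<open>auto simp del: upt_Suc simp add: B0_nth A_col\<close>)
      then show ?thesis using h r by simp
    qed
    have "S i = u i + S (Suc i)" unfolding S_def by (rule ind01_split[OF i])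
    then show "u i = 0" using S0[of i] S0[of "Suc i"] i by simp
  qed
  moreover have "length [0..<k+1] = k + 1" by simp
  moreover have "set [0..<k+1] \<subseteq> {..<length A}" using lenA by auto
  ultimately show ?thesis unfolding is_basis_def by simp
qed

lemma co0:
  assumes i: "i \<le> k"
  shows "co k A [0..<k+1] b i = (if i \<le> k then b i else 0) - (if Suc i \<le> k then b (Suc i) else 0)"
proof -
  define f where "f i = (if i \<le> k then b i else 0)" for i
  have "rep k A [0..<k+1] (\<lambda>i. f i - f (Suc i)) b"
    unfolding rep_def
  proof (intro allI impI)
    fix r assume r: "r \<le> k"
    have "(\<Sum>i\<le>k. (f i - f (Suc i)) * A ! ([0..<k+1] ! i) ! r)
        = (\<Sum>i\<le>k. (f i - f (Suc i)) * (if r \<le> i then 1 else 0))"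
      by (rule sum.cong) (use r in \<open>auto simp del: upt_Suc simp add: B0_nth A_col\<close>)
    also have "\<dots> = f r - f (Suc k)" using r by (intro telescope01) simp
    also have "\<dots> = b r" using r by (simp add: f_def)
    finally show "(\<Sum>i\<le>k. (f i - f (Suc i)) * A ! ([0..<k+1] ! i) ! r) = b r" .
  qed
  then show ?thesis using co_eq[OF basis0 _ i] by (simp add: f_def)
qed

lemma expand0:
  assumes "r \<le> k"
  shows "b r = (\<Sum>m\<le>k. co k A [0..<k+1] b m * A ! m ! r)"
proof -
  have "rep k A [0..<k+1] (co k A [0..<k+1] b) b" by (rule co_rep[OF basis0])
  then have "(\<Sum>m\<le>k. co k A [0..<k+1] b m * A ! ([0..<k+1] ! m) ! r) = b r"
    using assms by (simp add: rep_def)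
  moreover have "(\<Sum>m\<le>k. co k A [0..<k+1] b m * A ! ([0..<k+1] ! m) ! r) = (\<Sum>m\<le>k. co k A [0..<k+1] b m * A ! m ! r)"
    by (rule sum.cong) (auto simp del: upt_Suc simp add: B0_nth)
  ultimately show ?thesis by simp
qed

end


lemma finite_lists_bounded: "finite {B :: nat list. set B \<subseteq> {..<n} \<and> length B = m}"
  using finite_lists_length_eq[of "{..<n}" m] by simp

lemma basis_props: "is_basis k A B \<Longrightarrow> length B = k + 1 \<and> distinct B \<and> set B \<subseteq> {..<length A}"
  by (simp add: is_basis_def)

context init_cols
begin

lemma lp_exists:
  assumes lc: "length c = length A" and c0: "\<forall>j<length A. 0 \<le> c ! j"
    and pdec: "\<forall>i<k. p ! (Suc i) \<le> p ! i" and pk: "0 \<le> p ! k"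
  shows "\<exists>B \<pi>1 z. simplex_result k p A c B \<pi>1 z"
proof -
  define K where "K = Suc k"
  define n where "n = length A"
  define W where "W B i m = (if m = 0 then co k A B (\<lambda>r. p ! r) i else co k A B (\<lambda>r. A ! (m - 1) ! r) i)"
    for B i m
  define obj where "obj B m = (\<Sum>i\<le>k. c ! (B ! i) * W B i m)" for B m
  define LF where "LF = {B. is_basis k A B \<and> (\<forall>i\<le>k. lexpos K (W B i))}"
  define R where "R B1 B2 = lexpos K (\<lambda>m. obj B2 m - obj B1 m)" for B1 B2
  have finLF: "finite LF"
  proof (rule finite_subset[OF _ finite_lists_bounded[of n "k+1"]])
    show "LF \<subseteq> {B. set B \<subseteq> {..<n} \<and> length B = k + 1}"
      unfolding LF_def n_def using basis_props by blast
  qed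
  have B0LF: "[0..<k+1] \<in> LF"
  proof -
    have "lexpos K (W [0..<k+1] i)" if i: "i \<le> k" for i
    proof -
      have Wm: "W [0..<k+1] i m = (if i = m - 1 then 1 else 0)" if "0 < m" "m \<le> K" for m
      proof -
        have "m - 1 \<le> k" using that by (simp add: K_def)
        then have "co k A [0..<k+1] (\<lambda>r. A ! ([0..<k+1] ! (m - 1)) ! r) i = (if i = m - 1 then 1 else 0)"
          using co_basis_col[OF basis0 _ i] by blast
        then show ?thesis using that \<open>m - 1 \<le> k\<close> by (simp del: upt_Suc add: W_def B0_nth)
      qed
      have W0: "W [0..<k+1] i 0 = p ! i - (if Suc i \<le> k then p ! Suc i else 0)"
        using co0[OF i] i by (simp del: upt_Suc add: W_def)
      have W0nn: "0 \<le> W [0..<k+1] i 0" using W0 pdec pk i by (cases "i = k") auto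
      show ?thesis
      proof (cases "0 < W [0..<k+1] i 0")
        case True then show ?thesis unfolding lexpos_def by (intro exI[of _ 0]) simp
      next
        case False
        then have z: "W [0..<k+1] i 0 = 0" using W0nn by simp
        show ?thesis unfolding lexpos_def
        proof (intro exI[of _ "Suc i"] conjI allI impI)
          show "Suc i \<le> K" using i by (simp add: K_def)
          show "0 < W [0..<k+1] i (Suc i)" using Wm[of "Suc i"] i by (simp add: K_def)
          fix m' assume "m' < Suc i"
          then show "W [0..<k+1] i m' = 0" using z Wm[of m'] i by (cases "m' = 0") (auto simp: K_def)
        qed
      qed
    qed
    then show ?thesis unfolding LF_def using basis0 by simp
  qed
  have irr: "\<And>x. \<not> R x x" unfolding R_def using lexpos_not_zero by simp
  have transR: "\<And>x y z. R x y \<Longrightarrow> R y z \<Longrightarrow> R x z"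
  proof -
    fix x y z assume "R x y" "R y z"
    then have "lexpos K (\<lambda>m. (obj y m - obj x m) + (obj z m - obj y m))"
      unfolding R_def by (rule lexpos_add)
    then show "R x z" unfolding R_def by (rule lexpos_cong) simp
  qed
  have irr': "\<forall>x. \<not> R x x" using irr by blast
  have transR': "\<forall>x y z. R x y \<longrightarrow> R y z \<longrightarrow> R x z" using transR by blast
  have LFne: "LF \<noteq> {}" using B0LF by blast
  obtain B where BLF: "B \<in> LF" and Bmin: "\<forall>B'\<in>LF. \<not> R B' B"
    using finite_minimal_rel[of LF R, OF finLF LFne irr' transR'] by blast
  have BLF': "is_basis k A B \<and> (\<forall>i\<le>k. lexpos K (W B i))" using BLF by (simp add: LF_def)
  have Bb: "is_basis k A B" using BLF' by (rule conjunct1)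
  have Blex: "\<forall>i\<le>k. lexpos K (W B i)" using BLF' by (rule conjunct2)
  have lenB: "length B = k + 1" and distB: "distinct B" and setB: "set B \<subseteq> {..<n}"
    using basis_props[OF Bb] by (auto simp: n_def)
  have Bn: "B ! i < n" if "i \<le> k" for i
  proof -
    have "i < length B" using lenB that by simp
    then have "B ! i \<in> set B" by (rule nth_mem)
    then show ?thesis using setB by auto
  qed
  have cB: "0 \<le> c ! (B ! i)" if "i \<le> k" for i using c0 Bn[OF that] by (simp add: n_def)
  have x0: "0 \<le> W B i 0" if "i \<le> k" for i using lexpos_nonneg0 Blex that by blast
  have red: "(\<Sum>i\<le>k. c ! (B ! i) * co k A B (\<lambda>r. A ! j ! r) i) \<le> c ! j" if j: "j < n" for j
  proof (rule ccontr)
    assume neg: "\<not> ?thesis"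
    define d where "d = co k A B (\<lambda>r. A ! j ! r)"
    define D where "D = (\<Sum>i\<le>k. c ! (B ! i) * d i) - c ! j"
    have Dpos: "0 < D" using neg by (simp add: D_def d_def)
    have drep: "\<And>r. r \<le> k \<Longrightarrow> (\<Sum>i\<le>k. d i * A ! (B ! i) ! r) = A ! j ! r"
      using co_rep[OF Bb, of "\<lambda>r. A ! j ! r"] by (simp add: rep_def d_def)
    have jB: "j \<notin> set B"
    proof
      assume "j \<in> set B"
      then obtain m where m: "m < length B" "B ! m = j" by (auto simp: in_set_conv_nth)
      then have mk: "m \<le> k" using lenB by simp
      have "d i = (if i = m then 1 else 0)" if "i \<le> k" for i
        using co_basis_col[OF Bb mk that] m by (simp add: d_def)
      then have "(\<Sum>i\<le>k. c ! (B ! i) * d i) = (\<Sum>i\<le>k. if i = m then c ! (B ! i) else 0)"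
        by (intro sum.cong) auto
      also have "\<dots> = c ! j" using mk m by (simp add: sum.delta')
      finally show False using Dpos by (simp add: D_def)
    qed
    have cj: "0 \<le> c ! j" using c0 j by (simp add: n_def)
    show False
    proof (cases "\<forall>i\<le>k. d i \<le> 0")
      case True
      define X where "X = (\<Sum>i\<le>k. c ! (B ! i) * W B i 0)"
      define t where "t = (X + 1) / D"
      have X0: "0 \<le> X" unfolding X_def using cB x0 by (intro sum_nonneg mult_nonneg_nonneg) auto
      have t0: "0 \<le> t" unfolding t_def using X0 Dpos by simp
      have "0 \<le> (\<Sum>i\<le>k. c ! (B ! i) * (W B i 0 - t * d i)) + c ! j * t"
      proof (intro add_nonneg_nonneg sum_nonneg mult_nonneg_nonneg)
        fix i assume i: "i \<in> {..k}"
        show "0 \<le> c ! (B ! i)" using cB i by simp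
        have "t * d i \<le> 0" using True i t0 by (simp add: mult_nonneg_nonpos)
        moreover have "0 \<le> W B i 0" using x0 i by simp
        ultimately show "0 \<le> W B i 0 - t * d i" by linarith
      qed (use cj t0 in auto)
      also have "\<dots> = X - t * D"
        unfolding X_def D_def by (simp add: algebra_simps sum_subtractf sum_distrib_left)
      also have "\<dots> = -1" using Dpos by (simp add: t_def)
      finally show False by simp
    next
      case False
      define I where "I = {i. i \<le> k \<and> 0 < d i}"
      define Rl where "Rl i m = W B i m / d i" for i m
      define Q where "Q i1 i2 = lexpos K (\<lambda>m. Rl i2 m - Rl i1 m)" for i1 i2
      have Ine: "I \<noteq> {}" using False by (auto simp: I_def)
      have finI: "finite I" by (simp add: I_def)
      have irrQ: "\<And>x. \<not> Q x x" unfolding Q_def using lexpos_not_zero by simp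
      have transQ: "\<And>x y z. Q x y \<Longrightarrow> Q y z \<Longrightarrow> Q x z"
      proof -
        fix x y z assume "Q x y" "Q y z"
        then have "lexpos K (\<lambda>m. (Rl y m - Rl x m) + (Rl z m - Rl y m))"
          unfolding Q_def by (rule lexpos_add)
        then show "Q x z" unfolding Q_def by (rule lexpos_cong) simp
      qed
      have irrQ': "\<forall>x. \<not> Q x x" using irrQ by blast
      have transQ': "\<forall>x y z. Q x y \<longrightarrow> Q y z \<longrightarrow> Q x z" using transQ by blast
      obtain l where lI: "l \<in> I" and lmin: "\<forall>i\<in>I. \<not> Q i l"
        using finite_minimal_rel[of I Q, OF finI Ine irrQ' transQ'] by blast
      have lk: "l \<le> k" and dl: "0 < d l" using lI by (auto simp: I_def)
      define B' where "B' = B[l:=j]"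
      have jA: "j < length A" using j by (simp add: n_def)
      have sA: "set B \<subseteq> {..<length A}" using setB by (simp add: n_def)
      have dl0: "d l \<noteq> 0" using dl by simp
      have B'b: "is_basis k A B'" unfolding B'_def
        using pivot_basis[OF Bb lk jA jB sA _ drep dl0] by simp
      have B'nth: "B' ! i = (if i = l then j else B ! i)" if "i \<le> k" for i
        using that lenB lk by (simp add: B'_def nth_list_update)
      have coB': "co k A B' b i = (if i = l then co k A B b l / d l else co k A B b i - d i * co k A B b l / d l)"
        if i: "i \<le> k" for b i
      proof -
        define u where "u i = (if i = l then co k A B b l / d l else co k A B b i - d i * co k A B b l / d l)" for i
        have "rep k A B' u b" unfolding rep_def
        proof (intro allI impI)
          fix r assume r: "r \<le> k"
          have "(\<Sum>i\<le>k. u i * A ! (B' ! i) ! r)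
              = (\<Sum>i\<le>k. (co k A B b i - d i * co k A B b l / d l) * A ! (B ! i) ! r
                   + (if i = l then co k A B b l / d l * A ! j ! r else 0))"
            by (rule sum.cong) (use dl in \<open>auto simp: u_def B'nth\<close>)
          also have "\<dots> = (\<Sum>i\<le>k. co k A B b i * A ! (B ! i) ! r)
                 - co k A B b l / d l * (\<Sum>i\<le>k. d i * A ! (B ! i) ! r) + co k A B b l / d l * A ! j ! r"
            using lk by (simp add: sum.distrib sum_subtractf sum_distrib_left algebra_simps sum.delta)
          also have "\<dots> = b r" using drep[OF r] co_rep[OF Bb, of b] r by (simp add: rep_def)
          finally show "(\<Sum>i\<le>k. u i * A ! (B' ! i) ! r) = b r" .
        qed
        then show ?thesis using co_eq[OF B'b _ i] by (simp add: u_def)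
      qed
      have WB': "W B' i m = (if i = l then W B l m / d l else W B i m - d i * W B l m / d l)"
        if i: "i \<le> k" for i m
        unfolding W_def by (simp only: coB'[OF i]) auto
      have lexB': "lexpos K (W B' i)" if i: "i \<le> k" for i
      proof (cases "i = l")
        case True
        have "lexpos K (\<lambda>m. (1 / d l) * W B l m)" using Blex lk dl by (intro lexpos_scale) auto
        then show ?thesis by (rule lexpos_cong) (use True i in \<open>simp add: WB'\<close>)
      next
        case il: False
        show ?thesis
        proof (cases "0 < d i")
          case False
          show ?thesis
          proof (cases "d i = 0")
            case True
            have eqW: "\<And>m. W B i m = W B' i m" using il True by (simp add: WB'[OF i])
            have "lexpos K (W B i)" using Blex i by simp
            then show ?thesis by (rule lexpos_cong) (rule eqW)
          next
            case False
            have "lexpos K (\<lambda>m. W B i m + (- d i / d l) * W B l m)"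
              using Blex i lk dl False \<open>\<not> 0 < d i\<close> by (intro lexpos_add lexpos_scale) (auto simp: divide_neg_pos)
            then show ?thesis by (rule lexpos_cong) (use il i in \<open>simp add: WB' algebra_simps\<close>)
          qed
        next
          case dpos: True
          then have iI: "i \<in> I" using i by (simp add: I_def)
          have nz: "\<exists>m\<le>K. Rl i m - Rl l m \<noteq> 0"
          proof (rule ccontr)
            assume "\<not> ?thesis"
            then have eq: "\<And>m. m \<le> K \<Longrightarrow> Rl i m = Rl l m" by simp
            define b where "b = (\<lambda>r. A ! (B ! i) ! r)"
            define t where "t = co k A [0..<k+1] b"
            have "co k A B b = co k A B (\<lambda>r. \<Sum>m\<le>k. t m * A ! m ! r)"
              unfolding t_def by (rule co_cong) (erule expand0)
            then have colin: "co k A B b i' = (\<Sum>m\<le>k. t m * co k A B (\<lambda>r. A ! m ! r) i')" if "i' \<le> k" for i'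
              using co_lin[OF Bb _ that, of "{..k}" t "\<lambda>m r. A ! m ! r"] by simp
            have Wm: "co k A B (\<lambda>r. A ! m ! r) i' = W B i' (Suc m)" for m i'
              by (simp add: W_def)
            have eqm: "co k A B (\<lambda>r. A ! m ! r) i / d i = co k A B (\<lambda>r. A ! m ! r) l / d l" if "m \<le> k" for m
              using eq[of "Suc m"] that by (simp add: Wm Rl_def K_def)
            have "co k A B b i / d i = (\<Sum>m\<le>k. t m * (co k A B (\<lambda>r. A ! m ! r) i / d i))"
              using colin[OF i] by (simp add: sum_divide_distrib)
            also have "\<dots> = (\<Sum>m\<le>k. t m * (co k A B (\<lambda>r. A ! m ! r) l / d l))"
              using eqm by simp
            also have "\<dots> = co k A B b l / d l"
              using colin[OF lk] by (simp add: sum_divide_distrib)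
            finally have "co k A B b i / d i = co k A B b l / d l" .
            moreover have "co k A B b i = 1" using co_basis_col[OF Bb i i] by (simp add: b_def)
            moreover have "co k A B b l = 0" using co_basis_col[OF Bb i lk] il by (simp add: b_def)
            ultimately show False using dpos by simp
          qed
          then obtain m0 where m0: "m0 \<le> K" "Rl i m0 - Rl l m0 \<noteq> 0" by blast
          have nQ: "\<not> lexpos K (\<lambda>m. Rl l m - Rl i m)" using lmin iI by (simp add: Q_def)
          have "lexpos K (\<lambda>m. Rl i m - Rl l m)"
            using lexpos_total[of m0 K "\<lambda>m. Rl i m - Rl l m"] m0 nQ by (auto elim: lexpos_cong)
          then have "lexpos K (\<lambda>m. d i * (Rl i m - Rl l m))" using dpos by (rule lexpos_scale)
          then show ?thesis by (rule lexpos_cong) (use il i dpos in \<open>simp add: WB' Rl_def algebra_simps\<close>)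
        qed
      qed
      have B'LF: "B' \<in> LF" using B'b lexB' by (simp add: LF_def)
      have objB': "obj B' m = obj B m - (D / d l) * W B l m" for m
      proof -
        have "obj B' m = (\<Sum>i\<le>k. c ! (B ! i) * W B i m - c ! (B ! i) * d i * W B l m / d l
                             + (if i = l then c ! j * W B l m / d l else 0))"
          unfolding obj_def by (rule sum.cong) (use dl in \<open>auto simp: B'nth WB' algebra_simps\<close>)
        also have "\<dots> = obj B m - (\<Sum>i\<le>k. c ! (B ! i) * d i) * W B l m / d l + c ! j * W B l m / d l"
          using lk by (simp add: obj_def sum.distrib sum_subtractf sum_divide_distrib sum_distrib_right sum.delta)
        also have "\<dots> = obj B m - (D / d l) * W B l m"
          by (simp add: D_def algebra_simps diff_divide_distrib)
        finally show ?thesis .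
      qed
      have "R B' B"
      proof -
        have "lexpos K (\<lambda>m. (D / d l) * W B l m)" using Blex lk Dpos dl by (intro lexpos_scale) auto
        then show ?thesis unfolding R_def by (rule lexpos_cong) (simp add: objB')
      qed
      then show False using Bmin B'LF by blast
    qed
  qed
  define x where "x i = W B i 0" for i
  define \<pi>1 where "\<pi>1 = map (\<lambda>j. \<Sum>i\<le>k. if B ! i = j then x i else 0) [0..<n]"
  define e where "e r = (\<lambda>y::nat. if y = r then (1::real) else 0)" for r
  define z where "z = map (\<lambda>r. \<Sum>i\<le>k. c ! (B ! i) * co k A B (e r) i) [0..<k+1]"
  have xco: "x i = co k A B (\<lambda>r. p ! r) i" for i by (simp add: x_def W_def)
  have xnn: "0 \<le> x i" if "i \<le> k" for i using x0 that by (simp add: x_def)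
  have pi1nth: "\<pi>1 ! j = (\<Sum>i\<le>k. if B ! i = j then x i else 0)" if "j < n" for j
    using that by (simp add: \<pi>1_def)
  have znth: "z ! r = (\<Sum>i\<le>k. c ! (B ! i) * co k A B (e r) i)" if "r \<le> k" for r
    using that by (simp del: upt_Suc add: z_def nth_upt less_Suc_eq_le)
  have dotz: "dotk k z a = (\<Sum>i\<le>k. c ! (B ! i) * co k A B (\<lambda>r. a ! r) i)" for a
  proof -
    have "dotk k z a = (\<Sum>r\<le>k. (\<Sum>i\<le>k. c ! (B ! i) * co k A B (e r) i) * a ! r)"
      unfolding dotk_def by (rule sum.cong) (simp_all add: znth)
    also have "\<dots> = (\<Sum>r\<le>k. \<Sum>i\<le>k. c ! (B ! i) * (a ! r * co k A B (e r) i))"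
      by (rule sum.cong) (auto simp: sum_distrib_right intro!: sum.cong)
    also have "\<dots> = (\<Sum>i\<le>k. \<Sum>r\<le>k. c ! (B ! i) * (a ! r * co k A B (e r) i))"
      by (rule sum.swap)
    also have "\<dots> = (\<Sum>i\<le>k. c ! (B ! i) * (\<Sum>r\<le>k. a ! r * co k A B (e r) i))"
      by (simp add: sum_distrib_left)
    also have "\<dots> = (\<Sum>i\<le>k. c ! (B ! i) * co k A B (\<lambda>y. \<Sum>r\<le>k. a ! r * e r y) i)"
      by (rule sum.cong) (simp_all add: co_lin[OF Bb])
    also have "\<dots> = (\<Sum>i\<le>k. c ! (B ! i) * co k A B (\<lambda>r. a ! r) i)"
    proof -
      have "co k A B (\<lambda>y. \<Sum>r\<le>k. a ! r * e r y) = co k A B (\<lambda>r. a ! r)"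
        by (rule co_cong) (simp add: e_def ite01_mult mult.commute[of "a ! _"] sum.delta' cong: if_cong)
      then show ?thesis by simp
    qed
    finally show ?thesis .
  qed
  have mv: "mat_vec A \<pi>1 r = p ! r" if r: "r \<le> k" for r
  proof -
    have "mat_vec A \<pi>1 r = (\<Sum>j<n. \<Sum>i\<le>k. if B ! i = j then x i * A ! j ! r else 0)"
      unfolding mat_vec_def n_def[symmetric]
      by (rule sum.cong) (auto simp: pi1nth sum_distrib_left intro!: sum.cong)
    also have "\<dots> = (\<Sum>i\<le>k. \<Sum>j<n. if B ! i = j then x i * A ! j ! r else 0)"
      by (rule sum.swap)
    also have "\<dots> = (\<Sum>i\<le>k. x i * A ! (B ! i) ! r)"
      by (rule sum.cong) (simp_all add: sum.delta Bn)
    also have "\<dots> = p ! r" using co_rep[OF Bb, of "\<lambda>r. p ! r"] r by (simp add: rep_def xco)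
    finally show ?thesis .
  qed
  have bfs: "is_bfs k p A B \<pi>1"
    unfolding is_bfs_def feasible_def
  proof (intro conjI allI impI)
    show "is_basis k A B" by (rule Bb)
    show "length \<pi>1 = length A" by (simp add: \<pi>1_def n_def)
    fix j assume j: "j < length A"
    then show "0 \<le> \<pi>1 ! j" using xnn by (auto simp: pi1nth n_def intro!: sum_nonneg)
  next
    fix r assume "r \<le> k" then show "mat_vec A \<pi>1 r = p ! r" by (rule mv)
  next
    fix j assume j: "j < length A" and "j \<notin> set B"
    then have "\<forall>i\<le>k. B ! i \<noteq> j" using lenB by (auto simp: in_set_conv_nth)
    then show "\<pi>1 ! j = 0" using j by (simp add: pi1nth n_def)
  qed
  have "simplex_result k p A c B \<pi>1 z"
    unfolding simplex_result_def
  proof (intro conjI allI impI)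
    show "is_bfs k p A B \<pi>1" by (rule bfs)
    show "length z = k + 1" by (simp add: z_def)
    fix i assume i: "i \<le> k"
    have "dotk k z (A ! (B ! i)) = (\<Sum>m\<le>k. c ! (B ! m) * (if m = i then 1 else 0))"
      unfolding dotz by (rule sum.cong) (simp_all add: co_basis_col[OF Bb i])
    also have "\<dots> = c ! (B ! i)" using i by (simp add: if_distrib sum.delta cong: if_cong)
    finally show "dotk k z (A ! (B ! i)) = c ! (B ! i)" .
  next
    fix j assume "j < length A"
    then show "dotk k z (A ! j) \<le> c ! j" unfolding dotz using red by (simp add: n_def)
  qed
  then show ?thesis by blast
qed

end


definition sel :: "nat \<Rightarrow> nat list \<Rightarrow> (nat \<Rightarrow> real) \<Rightarrow> nat \<Rightarrow> real" where
  "sel k B f j = (\<Sum>i\<le>k. if B ! i = j then f i else 0)"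

lemma sel_at:
  assumes "distinct B" "length B = k + 1" "m \<le> k"
  shows "sel k B f (B ! m) = f m"
proof -
  have "sel k B f (B ! m) = (\<Sum>i\<le>k. if i = m then f i else 0)"
    unfolding sel_def
  proof (rule sum.cong)
    fix i assume "i \<in> {..k}"
    then have "B ! i = B ! m \<longleftrightarrow> i = m" using assms by (simp add: nth_eq_iff_index_eq)
    then show "(if B ! i = B ! m then f i else 0) = (if i = m then f i else 0)" by simp
  qed simp
  also have "\<dots> = f m" using assms(3) by (simp add: sum.delta)
  finally show ?thesis .
qed

lemma sel_out:
  assumes "j \<notin> set B" "length B = k + 1"
  shows "sel k B f j = 0"
proof -
  have "\<forall>i\<le>k. B ! i \<noteq> j" using assms by (auto simp: in_set_conv_nth)
  then show ?thesis unfolding sel_def by simp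
qed

lemma sel_sum:
  assumes "set B \<subseteq> {..<n}" "length B = k + 1"
  shows "(\<Sum>j<n. g j * sel k B f j) = (\<Sum>i\<le>k. f i * g (B ! i))"
proof -
  have Bn: "B ! i < n" if "i \<le> k" for i
  proof -
    have "i < length B" using assms(2) that by simp
    then have "B ! i \<in> set B" by (rule nth_mem)
    then show ?thesis using assms(1) by auto
  qed
  have "(\<Sum>j<n. g j * sel k B f j) = (\<Sum>j<n. \<Sum>i\<le>k. if B ! i = j then f i * g j else 0)"
    unfolding sel_def by (rule sum.cong) (auto simp: sum_distrib_left intro!: sum.cong)
  also have "\<dots> = (\<Sum>i\<le>k. \<Sum>j<n. if B ! i = j then f i * g j else 0)" by (rule sum.swap)
  also have "\<dots> = (\<Sum>i\<le>k. f i * g (B ! i))"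
    by (rule sum.cong) (simp_all add: sum.delta Bn)
  finally show ?thesis .
qed

lemma add_pivot:
  assumes sr: "simplex_result k p A c B \<pi>1 z"
    and lc: "length c = length A" and c0: "\<forall>j<length A. 0 \<le> c ! j"
    and zy: "0 < dotk k z y"
  shows "\<exists>l\<le>k. \<exists>\<pi>2. is_bfs k p (A @ [y]) (B[l := length A]) \<pi>2"
proof -
  define n where "n = length A"
  have bfs: "is_bfs k p A B \<pi>1" using sr by (simp add: simplex_result_def)
  have zB: "\<And>i. i \<le> k \<Longrightarrow> dotk k z (A ! (B ! i)) = c ! (B ! i)" using sr by (simp add: simplex_result_def)
  have Bb: "is_basis k A B" using bfs by (simp add: is_bfs_def)
  have lenB: "length B = k + 1" and distB: "distinct B" and setB: "set B \<subseteq> {..<n}"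
    using basis_props[OF Bb] by (auto simp: n_def)
  have Bn: "B ! i < n" if "i \<le> k" for i
  proof -
    have "i < length B" using lenB that by simp
    then have "B ! i \<in> set B" by (rule nth_mem)
    then show ?thesis using setB by auto
  qed
  have feas: "feasible k p A \<pi>1" using bfs by (simp add: is_bfs_def)
  have lenpi: "length \<pi>1 = n" and pinn: "\<forall>j<n. 0 \<le> \<pi>1 ! j" and pmv: "\<forall>r\<le>k. mat_vec A \<pi>1 r = p ! r"
    using feas by (auto simp: feasible_def n_def)
  have pnb: "\<forall>j<n. j \<notin> set B \<longrightarrow> \<pi>1 ! j = 0" using bfs by (simp add: is_bfs_def n_def)
  define x where "x i = \<pi>1 ! (B ! i)" for i
  have xnn: "0 \<le> x i" if "i \<le> k" for i using pinn Bn[OF that] by (simp add: x_def)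
  have pisel: "\<pi>1 ! j = sel k B x j" if "j < n" for j
  proof (cases "j \<in> set B")
    case True
    then obtain m where m: "m < length B" "B ! m = j" by (auto simp: in_set_conv_nth)
    then show ?thesis using sel_at[OF distB lenB, of m x] lenB by (simp add: x_def)
  next
    case False then show ?thesis using pnb that sel_out[OF False lenB] by simp
  qed
  have prep: "(\<Sum>i\<le>k. x i * A ! (B ! i) ! r) = p ! r" if r: "r \<le> k" for r
  proof -
    have "p ! r = (\<Sum>j<n. A ! j ! r * \<pi>1 ! j)" using pmv r by (simp add: mat_vec_def n_def)
    also have "\<dots> = (\<Sum>j<n. A ! j ! r * sel k B x j)" by (rule sum.cong) (simp_all add: pisel)
    also have "\<dots> = (\<Sum>i\<le>k. x i * A ! (B ! i) ! r)" by (rule sel_sum[OF setB lenB])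
    finally show ?thesis by simp
  qed
  have cB: "0 \<le> c ! (B ! i)" if "i \<le> k" for i using c0 Bn[OF that] by (simp add: n_def)
  define d where "d = co k A B (\<lambda>r. y ! r)"
  have drep: "\<And>r. r \<le> k \<Longrightarrow> (\<Sum>i\<le>k. d i * A ! (B ! i) ! r) = y ! r"
    using co_rep[OF Bb, of "\<lambda>r. y ! r"] by (simp add: rep_def d_def)
  have zyeq: "dotk k z y = (\<Sum>i\<le>k. c ! (B ! i) * d i)"
  proof -
    have "dotk k z y = (\<Sum>r\<le>k. z ! r * (\<Sum>i\<le>k. d i * A ! (B ! i) ! r))"
      unfolding dotk_def by (rule sum.cong) (simp_all add: drep)
    also have "\<dots> = (\<Sum>r\<le>k. \<Sum>i\<le>k. d i * (z ! r * A ! (B ! i) ! r))"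
      by (rule sum.cong) (auto simp: sum_distrib_left intro!: sum.cong)
    also have "\<dots> = (\<Sum>i\<le>k. \<Sum>r\<le>k. d i * (z ! r * A ! (B ! i) ! r))" by (rule sum.swap)
    also have "\<dots> = (\<Sum>i\<le>k. d i * dotk k z (A ! (B ! i)))"
      by (simp add: dotk_def sum_distrib_left)
    also have "\<dots> = (\<Sum>i\<le>k. c ! (B ! i) * d i)" by (rule sum.cong) (simp_all add: zB)
    finally show ?thesis .
  qed
  show ?thesis
  proof (cases "\<forall>i\<le>k. d i \<le> 0")
    case True
    define D where "D = dotk k z y"
    define X where "X = (\<Sum>i\<le>k. c ! (B ! i) * x i)"
    define t where "t = (X + 1) / D"
    have X0: "0 \<le> X" unfolding X_def using cB xnn by (intro sum_nonneg mult_nonneg_nonneg) auto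
    have t0: "0 \<le> t" unfolding t_def using X0 zy by (simp add: D_def)
    have "0 \<le> (\<Sum>i\<le>k. c ! (B ! i) * (x i - t * d i))"
    proof (intro sum_nonneg mult_nonneg_nonneg)
      fix i assume i: "i \<in> {..k}"
      show "0 \<le> c ! (B ! i)" using cB i by simp
      have "t * d i \<le> 0" using True i t0 by (simp add: mult_nonneg_nonpos)
      moreover have "0 \<le> x i" using xnn i by simp
      ultimately show "0 \<le> x i - t * d i" by linarith
    qed
    also have "\<dots> = X - t * D"
      unfolding X_def D_def zyeq by (simp add: algebra_simps sum_subtractf sum_distrib_left)
    also have "\<dots> = -1" using zy by (simp add: t_def D_def)
    finally show ?thesis by simp
  next
    case False
    define I where "I = {i. i \<le> k \<and> 0 < d i}"
    have Ine: "I \<noteq> {}" using False by (auto simp: I_def)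
    have finI: "finite I" by (simp add: I_def)
    define f where "f i = x i / d i" for i
    define \<theta> where "\<theta> = Min (f ` I)"
    have "\<theta> \<in> f ` I" unfolding \<theta>_def using finI Ine by (intro Min_in) auto
    then obtain l where lI: "l \<in> I" and thl: "\<theta> = f l" by auto
    have thmin: "\<theta> \<le> f i" if "i \<in> I" for i unfolding \<theta>_def using finI that by (intro Min_le) auto
    have lk: "l \<le> k" and dl: "0 < d l" using lI by (auto simp: I_def)
    have th0: "0 \<le> \<theta>" using thl xnn[OF lk] dl by (simp add: f_def)
    define B' where "B' = B[l := n]"
    define \<pi>2 where "\<pi>2 = map (\<lambda>j. if j < n then \<pi>1 ! j - \<theta> * sel k B d j else \<theta>) [0..<n+1]"
    have pi2nth: "\<pi>2 ! j = (if j < n then \<pi>1 ! j - \<theta> * sel k B d j else \<theta>)" if "j < n + 1" for j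
      using that by (simp del: upt_Suc add: \<pi>2_def nth_upt)
    have nB: "n \<notin> set B" using setB by auto
    have B'b: "is_basis k (A @ [y]) B'" unfolding B'_def
    proof (rule pivot_basis[OF Bb lk])
      show "n < length (A @ [y])" by (simp add: n_def)
      show "n \<notin> set B" by (rule nB)
      show "set B \<subseteq> {..<length (A @ [y])}" using setB by (auto simp: n_def)
      show "(A @ [y]) ! (B ! i) = A ! (B ! i)" if "i \<le> k" for i
        using Bn[OF that] by (simp add: nth_append n_def)
      show "(\<Sum>i\<le>k. d i * A ! (B ! i) ! r) = (A @ [y]) ! n ! r" if "r \<le> k" for r
        using drep[OF that] by (simp add: n_def)
      show "d l \<noteq> 0" using dl by simp
    qed
    have B'nth: "B' ! i = (if i = l then n else B ! i)" if "i \<le> k" for i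
      using that lenB lk by (simp add: B'_def nth_list_update)
    have "is_bfs k p (A @ [y]) B' \<pi>2"
      unfolding is_bfs_def feasible_def
    proof (intro conjI allI impI)
      show "is_basis k (A @ [y]) B'" by (rule B'b)
      show "length \<pi>2 = length (A @ [y])" by (simp add: \<pi>2_def n_def)
    next
      fix j assume "j < length (A @ [y])"
      then have j: "j < n + 1" by (simp add: n_def)
      show "0 \<le> \<pi>2 ! j"
      proof (cases "j < n")
        case jn: True
        show ?thesis
        proof (cases "j \<in> set B")
          case True
          then obtain m where m: "m < length B" "B ! m = j" by (auto simp: in_set_conv_nth)
          have mk: "m \<le> k" using m lenB by simp
          have "\<pi>1 ! j = x m" using m by (simp add: x_def)
          moreover have "sel k B d j = d m" using sel_at[OF distB lenB mk] m by simp
          moreover have "\<theta> * d m \<le> x m"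
          proof (cases "0 < d m")
            case True
            then have "m \<in> I" using mk by (simp add: I_def)
            then have "\<theta> \<le> x m / d m" using thmin by (simp add: f_def)
            then show ?thesis using True by (simp add: pos_le_divide_eq)
          next
            case False
            then have "\<theta> * d m \<le> 0" using th0 by (simp add: mult_nonneg_nonpos)
            then show ?thesis using xnn[OF mk] by linarith
          qed
          ultimately show ?thesis using pi2nth[OF j] jn by simp
        next
          case False
          then show ?thesis using pi2nth[OF j] jn sel_out[OF False lenB] pinn by simp
        qed
      next
        case False then show ?thesis using pi2nth[OF j] th0 by simp
      qed
    next
      fix r assume r: "r \<le> k"
      have "mat_vec (A @ [y]) \<pi>2 r = (\<Sum>j<n+1. (A @ [y]) ! j ! r * \<pi>2 ! j)"
        by (simp add: mat_vec_def n_def)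
      also have "\<dots> = (\<Sum>j<n. (A @ [y]) ! j ! r * \<pi>2 ! j) + y ! r * \<theta>"
        using pi2nth[of n] by (simp add: nth_append n_def)
      also have "(\<Sum>j<n. (A @ [y]) ! j ! r * \<pi>2 ! j) = (\<Sum>j<n. A ! j ! r * \<pi>1 ! j) - \<theta> * (\<Sum>j<n. A ! j ! r * sel k B d j)"
      proof -
        have "(\<Sum>j<n. (A @ [y]) ! j ! r * \<pi>2 ! j) = (\<Sum>j<n. A ! j ! r * \<pi>1 ! j - \<theta> * (A ! j ! r * sel k B d j))"
          by (rule sum.cong) (auto simp: nth_append pi2nth algebra_simps n_def)
        then show ?thesis by (simp add: sum_subtractf sum_distrib_left)
      qed
      also have "(\<Sum>j<n. A ! j ! r * sel k B d j) = y ! r"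
        using sel_sum[OF setB lenB, of "\<lambda>j. A ! j ! r" d] drep[OF r] by simp
      also have "(\<Sum>j<n. A ! j ! r * \<pi>1 ! j) = p ! r" using pmv r by (simp add: mat_vec_def n_def)
      finally show "mat_vec (A @ [y]) \<pi>2 r = p ! r" by simp
    next
      fix j assume jl: "j < length (A @ [y])" and jB': "j \<notin> set B'"
      then have j: "j < n + 1" by (simp add: n_def)
      have lB: "l < length B" using lk lenB by simp
      have "n \<in> set B'" unfolding B'_def using lB by (simp add: set_update_memI)
      then have jn: "j < n" using j jB' by (cases "j = n") auto
      show "\<pi>2 ! j = 0"
      proof (cases "j = B ! l")
        case True
        have "sel k B d j = d l" using sel_at[OF distB lenB lk] True by simp
        moreover have "\<pi>1 ! j = x l" using True by (simp add: x_def)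
        ultimately show ?thesis using pi2nth[OF j] jn thl dl by (simp add: f_def)
      next
        case False
        have "j \<notin> set B"
        proof
          assume "j \<in> set B"
          then obtain m where m: "m < length B" "B ! m = j" by (auto simp: in_set_conv_nth)
          then have "m \<noteq> l" using False by auto
          then have "B' ! m = j" using m lenB B'nth[of m] by simp
          then have "j \<in> set B'" using m by (auto simp: B'_def in_set_conv_nth)
          then show False using jB' by simp
        qed
        then show ?thesis using pi2nth[OF j] jn sel_out[OF _ lenB] pnb by simp
      qed
    qed
    then show ?thesis using lk unfolding B'_def n_def by blast
  qed
qed


definition good :: "'a pform set \<Rightarrow> (nat \<Rightarrow> 'a) \<Rightarrow> (nat \<Rightarrow> nat) \<Rightarrow> nat \<Rightarrow> real list list \<Rightarrow> real list \<Rightarrow> bool" where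
  "good G yv \<sigma> k A c \<longleftrightarrow> k < length A \<and> (\<forall>j\<le>k. A ! j = A_init k ! j)
     \<and> (\<forall>j<length A. is_column k (A ! j)) \<and> length c = length A
     \<and> (\<forall>j<length A. c ! j = (if gamma_consistent G yv \<sigma> k (A ! j) then 0 else 1))
     \<and> distinct A"

lemma pvec_nth0: "pvec ps \<sigma> k ! 0 = 1"
  by (simp add: pvec_def)

lemma pvec_nth: "1 \<le> r \<Longrightarrow> r \<le> k \<Longrightarrow> pvec ps \<sigma> k ! r = ps (\<sigma> r)"
  by (cases r) (simp_all del: upt_Suc add: pvec_def nth_upt)

lemma pvec_len: "length (pvec ps \<sigma> k) = k + 1"
  by (simp add: pvec_def)

lemma cost_nonneg:
  assumes "length c = length \<pi>" "\<forall>j<length c. 0 \<le> c ! j" "\<forall>j<length c. 0 \<le> \<pi> ! j"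
  shows "0 \<le> cost c \<pi>"
  unfolding cost_def using assms by (intro sum_nonneg mult_nonneg_nonneg) auto

lemma good_c_nonneg: "good G yv \<sigma> k A c \<Longrightarrow> \<forall>j<length A. 0 \<le> c ! j"
  unfolding good_def by auto

lemma unsat_from_no:
  fixes G :: "'a::finite pform set"
  assumes gd: "good G yv \<sigma> k A c" and sr: "simplex_result k (pvec ps \<sigma> k) A c B \<pi>1 z"
    and cpos: "0 < cost c \<pi>1"
    and noy: "\<not> (\<exists>y. is_column k y \<and> gamma_consistent G yv \<sigma> k y \<and> dotk k z y > 0)"
    and sig: "bij_betw \<sigma> {1..k} {1..k}"
  shows "\<not> psat_satisfiable G yv ps k"
proof
  assume "psat_satisfiable G yv ps k"
  then obtain \<mu> where dist: "is_distribution \<mu>" and pg: "\<forall>g\<in>G. prob_of \<mu> g = 1"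
    and pv: "\<forall>i\<in>{1..k}. prob_of \<mu> (PVar (yv i)) = ps i"
    unfolding psat_satisfiable_def by blast
  define p where "p = pvec ps \<sigma> k"
  define n where "n = length A"
  have mu0: "\<And>v. 0 \<le> \<mu> v" and mu1: "(\<Sum>v\<in>UNIV. \<mu> v) = 1" using dist by (auto simp: is_distribution_def)
  have bfs: "is_bfs k p A B \<pi>1" using sr by (simp add: simplex_result_def p_def)
  have zB: "\<And>i. i \<le> k \<Longrightarrow> dotk k z (A ! (B ! i)) = c ! (B ! i)" using sr by (simp add: simplex_result_def)
  have Bb: "is_basis k A B" using bfs by (simp add: is_bfs_def)
  have lenB: "length B = k + 1" using basis_props[OF Bb] by simp
  have lenc: "length c = n" using gd by (simp add: good_def n_def)
  have feas: "feasible k p A \<pi>1" using bfs by (simp add: is_bfs_def)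
  have pmv: "\<forall>r\<le>k. (\<Sum>j<n. A ! j ! r * \<pi>1 ! j) = p ! r" using feas by (simp add: feasible_def mat_vec_def n_def)
  have pnb: "\<forall>j<n. j \<notin> set B \<longrightarrow> \<pi>1 ! j = 0" using bfs by (simp add: is_bfs_def n_def)
  have costeq: "cost c \<pi>1 = dotk k z p"
  proof -
    have "cost c \<pi>1 = (\<Sum>j<n. dotk k z (A ! j) * \<pi>1 ! j)"
      unfolding cost_def lenc
    proof (rule sum.cong)
      fix j assume j: "j \<in> {..<n}"
      show "c ! j * \<pi>1 ! j = dotk k z (A ! j) * \<pi>1 ! j"
      proof (cases "j \<in> set B")
        case True
        then obtain i where i: "i < length B" "B ! i = j" by (auto simp: in_set_conv_nth)
        then show ?thesis using zB[of i] lenB by simp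
      next
        case False then show ?thesis using pnb j by simp
      qed
    qed simp
    also have "\<dots> = (\<Sum>j<n. \<Sum>r\<le>k. z ! r * (A ! j ! r * \<pi>1 ! j))"
      by (simp add: dotk_def sum_distrib_right mult.assoc)
    also have "\<dots> = (\<Sum>r\<le>k. \<Sum>j<n. z ! r * (A ! j ! r * \<pi>1 ! j))" by (rule sum.swap)
    also have "\<dots> = (\<Sum>r\<le>k. z ! r * p ! r)"
      by (rule sum.cong) (simp_all add: sum_distrib_left[symmetric] pmv)
    finally show ?thesis by (simp add: dotk_def)
  qed
  define colv where "colv v = map (\<lambda>r. if r = 0 then 1 else if v (yv (\<sigma> r)) then 1 else (0::real)) [0..<k+1]"
    for v :: "'a \<Rightarrow> bool"
  have colv_nth: "colv v ! r = (if r = 0 then 1 else if v (yv (\<sigma> r)) then 1 else 0)" if "r \<le> k" for v r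
    using that by (simp del: upt_Suc add: colv_def nth_upt less_Suc_eq_le)
  have models: "\<forall>g\<in>G. peval v g" if "0 < \<mu> v" for v
  proof
    fix g assume g: "g \<in> G"
    define S where "S = {v. peval v g}"
    have "(\<Sum>v\<in>UNIV. \<mu> v) = (\<Sum>v\<in>S. \<mu> v) + (\<Sum>v\<in>UNIV - S. \<mu> v)"
      by (metis (no_types) add.commute finite_class.finite_UNIV sum.subset_diff top_greatest)
    moreover have "(\<Sum>v\<in>S. \<mu> v) = 1" using pg g by (simp add: prob_of_def S_def)
    ultimately have "(\<Sum>v\<in>UNIV - S. \<mu> v) = 0" using mu1 by simp
    then have "\<forall>v\<in>UNIV - S. \<mu> v = 0" using mu0 by (simp add: sum_nonneg_eq_0_iff)
    then have "v \<notin> UNIV - S" using that by force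
    then show "peval v g" by (simp add: S_def)
  qed
  have termle: "\<mu> v * dotk k z (colv v) \<le> 0" for v
  proof (cases "0 < \<mu> v")
    case True
    have "length (colv v) = k + 1" by (simp add: colv_def)
    then have "is_column k (colv v)" unfolding is_column_def by (simp add: colv_nth)
    moreover have "gamma_consistent G yv \<sigma> k (colv v)"
      unfolding gamma_consistent_def using models[OF True] by (intro exI[of _ v]) (auto simp: colv_nth)
    ultimately have "\<not> dotk k z (colv v) > 0" using noy by blast
    then show ?thesis using True by (simp add: mult_nonneg_nonpos)
  next
    case False then have "\<mu> v = 0" using mu0[of v] by simp
    then show ?thesis by simp
  qed
  have "(\<Sum>v\<in>UNIV. \<mu> v * dotk k z (colv v)) = (\<Sum>r\<le>k. z ! r * (\<Sum>v\<in>UNIV. \<mu> v * colv v ! r))"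
  proof -
    have "(\<Sum>v\<in>UNIV. \<mu> v * dotk k z (colv v)) = (\<Sum>v\<in>UNIV. \<Sum>r\<le>k. z ! r * (\<mu> v * colv v ! r))"
      by (simp add: dotk_def sum_distrib_left algebra_simps)
    also have "\<dots> = (\<Sum>r\<le>k. \<Sum>v\<in>UNIV. z ! r * (\<mu> v * colv v ! r))" by (rule sum.swap)
    also have "\<dots> = (\<Sum>r\<le>k. z ! r * (\<Sum>v\<in>UNIV. \<mu> v * colv v ! r))" by (simp add: sum_distrib_left)
    finally show ?thesis .
  qed
  also have "\<dots> = (\<Sum>r\<le>k. z ! r * p ! r)"
  proof (rule sum.cong)
    fix r assume r: "r \<in> {..k}"
    show "z ! r * (\<Sum>v\<in>UNIV. \<mu> v * colv v ! r) = z ! r * p ! r"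
    proof (cases "r = 0")
      case True
      then show ?thesis using mu1 by (simp add: colv_nth p_def pvec_nth0)
    next
      case False
      then have r1: "r \<in> {1..k}" using r by auto
      then have sr: "\<sigma> r \<in> {1..k}" using sig by (auto simp: bij_betw_def)
      have "(\<Sum>v\<in>UNIV. \<mu> v * colv v ! r) = (\<Sum>v\<in>UNIV. if v (yv (\<sigma> r)) then \<mu> v else 0)"
        by (rule sum.cong) (use r False in \<open>auto simp: colv_nth\<close>)
      also have "\<dots> = (\<Sum>v\<in>UNIV \<inter> {v. v (yv (\<sigma> r))}. \<mu> v)"
        using sum.inter_restrict[of UNIV \<mu> "{v. v (yv (\<sigma> r))}"] by simp
      also have "\<dots> = prob_of \<mu> (PVar (yv (\<sigma> r)))" by (simp add: prob_of_def)
      also have "\<dots> = ps (\<sigma> r)" using pv sr by blast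
      also have "\<dots> = p ! r" using r1 by (simp add: p_def pvec_nth)
      finally show ?thesis by simp
    qed
  qed simp
  also have "\<dots> = cost c \<pi>1" by (simp add: costeq dotk_def)
  finally have "cost c \<pi>1 = (\<Sum>v\<in>UNIV. \<mu> v * dotk k z (colv v))" by simp
  also have "\<dots> \<le> 0" by (intro sum_nonpos termle)
  finally show False using cpos by simp
qed


lemma sat_from_solution:
  fixes G :: "'a::finite pform set"
  assumes gd: "good G yv \<sigma> k A c" and feas: "feasible k (pvec ps \<sigma> k) A \<pi>"
    and c0: "cost c \<pi> = 0" and sig: "bij_betw \<sigma> {1..k} {1..k}"
  shows "psat_satisfiable G yv ps k"
proof -
  define p where "p = pvec ps \<sigma> k"
  define n where "n = length A"
  have lenc: "length c = n" and cdef: "\<forall>j<n. c ! j = (if gamma_consistent G yv \<sigma> k (A ! j) then 0 else 1)"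
    and cols: "\<forall>j<n. is_column k (A ! j)"
    using gd by (auto simp: good_def n_def)
  have lenpi: "length \<pi> = n" and pinn: "\<forall>j<n. 0 \<le> \<pi> ! j"
    and pmv: "\<forall>r\<le>k. (\<Sum>j<n. A ! j ! r * \<pi> ! j) = p ! r"
    using feas by (auto simp: feasible_def mat_vec_def n_def p_def)
  define J where "J = {j. j < n \<and> c ! j = 0}"
  have finJ: "finite J" by (simp add: J_def)
  have piJ: "\<pi> ! j = 0" if "j < n" "j \<notin> J" for j
  proof -
    have terms: "\<forall>j\<in>{..<n}. 0 \<le> c ! j * \<pi> ! j"
      using cdef pinn by (auto intro!: mult_nonneg_nonneg)
    have "(\<Sum>j<n. c ! j * \<pi> ! j) = 0" using c0 by (simp add: cost_def lenc)
    then have "\<forall>j\<in>{..<n}. c ! j * \<pi> ! j = 0" using terms sum_nonneg_eq_0_iff[of "{..<n}" "\<lambda>j. c ! j * \<pi> ! j"] by blast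
    moreover have "c ! j = 1" using that cdef by (auto simp: J_def)
    ultimately show ?thesis using that by force
  qed
  have consJ: "gamma_consistent G yv \<sigma> k (A ! j)" if "j \<in> J" for j
    using that cdef by (auto simp: J_def split: if_splits)
  define w where "w j = (SOME v. (\<forall>g\<in>G. peval v g) \<and> (\<forall>r\<in>{1..k}. v (yv (\<sigma> r)) = (A ! j ! r = 1)))" for j
  have w: "(\<forall>g\<in>G. peval (w j) g) \<and> (\<forall>r\<in>{1..k}. w j (yv (\<sigma> r)) = (A ! j ! r = 1))" if "j \<in> J" for j
    using consJ[OF that] unfolding gamma_consistent_def w_def by (rule someI_ex)
  define \<mu> where "\<mu> v = (\<Sum>j\<in>J. if w j = v then \<pi> ! j else 0)" for v
  have musum: "(\<Sum>v\<in>S. \<mu> v) = (\<Sum>j\<in>J. if w j \<in> S then \<pi> ! j else 0)" for S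
  proof -
    have "(\<Sum>v\<in>S. \<mu> v) = (\<Sum>j\<in>J. \<Sum>v\<in>S. if w j = v then \<pi> ! j else 0)"
      unfolding \<mu>_def by (rule sum.swap)
    also have "\<dots> = (\<Sum>j\<in>J. if w j \<in> S then \<pi> ! j else 0)"
      by (rule sum.cong) (simp_all add: sum.delta finite_subset[OF subset_UNIV])
    finally show ?thesis .
  qed
  have sumJ: "(\<Sum>j\<in>J. f j * \<pi> ! j) = (\<Sum>j<n. f j * \<pi> ! j)" for f
    by (rule sum.mono_neutral_left) (auto simp: J_def piJ)
  have col0: "A ! j ! 0 = 1" if "j < n" for j using cols that by (simp add: is_column_def)
  have tot: "(\<Sum>j\<in>J. \<pi> ! j) = 1"
  proof -
    have "(\<Sum>j\<in>J. \<pi> ! j) = (\<Sum>j\<in>J. A ! j ! 0 * \<pi> ! j)"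
      by (rule sum.cong) (simp_all add: J_def col0)
    also have "\<dots> = (\<Sum>j<n. A ! j ! 0 * \<pi> ! j)" by (rule sumJ)
    also have "\<dots> = 1" using pmv by (simp add: p_def pvec_nth0)
    finally show ?thesis .
  qed
  have mu0: "0 \<le> \<mu> v" for v unfolding \<mu>_def using pinn by (intro sum_nonneg) (auto simp: J_def)
  have mutot: "(\<Sum>v\<in>UNIV. \<mu> v) = 1" using musum[of UNIV] tot by simp
  have mu1: "\<mu> v \<le> 1" for v
  proof -
    have "\<mu> v \<le> (\<Sum>v\<in>UNIV. \<mu> v)" by (rule member_le_sum) (simp_all add: mu0)
    then show ?thesis using mutot by simp
  qed
  have "is_distribution \<mu>" unfolding is_distribution_def using mu0 mu1 mutot by simp
  moreover have "\<forall>g\<in>G. prob_of \<mu> g = 1"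
  proof
    fix g assume g: "g \<in> G"
    have "prob_of \<mu> g = (\<Sum>j\<in>J. if w j \<in> {v. peval v g} then \<pi> ! j else 0)"
      unfolding prob_of_def by (rule musum)
    also have "\<dots> = (\<Sum>j\<in>J. \<pi> ! j)" by (rule sum.cong) (use w g in auto)
    finally show "prob_of \<mu> g = 1" using tot by simp
  qed
  moreover have "\<forall>i\<in>{1..k}. prob_of \<mu> (PVar (yv i)) = ps i"
  proof
    fix i assume i: "i \<in> {1..k}"
    have "i \<in> \<sigma> ` {1..k}" using sig i by (simp add: bij_betw_def)
    then obtain r where r: "r \<in> {1..k}" "\<sigma> r = i" by blast
    have "prob_of \<mu> (PVar (yv i)) = (\<Sum>j\<in>J. if w j \<in> {v. v (yv (\<sigma> r))} then \<pi> ! j else 0)"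
      unfolding prob_of_def using r by (simp add: musum)
    also have "\<dots> = (\<Sum>j\<in>J. A ! j ! r * \<pi> ! j)"
    proof (rule sum.cong)
      fix j assume j: "j \<in> J"
      have "A ! j ! r \<in> {0, 1}" using cols j r by (auto simp: is_column_def J_def)
      then show "(if w j \<in> {v. v (yv (\<sigma> r))} then \<pi> ! j else 0) = A ! j ! r * \<pi> ! j"
        using w[OF j] r by auto
    qed simp
    also have "\<dots> = (\<Sum>j<n. A ! j ! r * \<pi> ! j)" by (rule sumJ)
    also have "\<dots> = p ! r" using pmv r by simp
    also have "\<dots> = ps i" using r by (simp add: p_def pvec_nth)
    finally show "prob_of \<mu> (PVar (yv i)) = ps i" .
  qed
  ultimately show ?thesis unfolding psat_satisfiable_def by blast
qed


definition cg_inv :: "'a::finite pform set \<Rightarrow> (nat \<Rightarrow> 'a) \<Rightarrow> (nat \<Rightarrow> real) \<Rightarrow> (nat \<Rightarrow> nat) \<Rightarrow> nat \<Rightarrow> cg_state \<Rightarrow> bool" where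
  "cg_inv G yv ps \<sigma> k s \<longleftrightarrow> (case s of
      Running A c \<pi> \<Rightarrow> good G yv \<sigma> k A c \<and> feasible k (pvec ps \<sigma> k) A \<pi>
    | Returned A c \<pi> \<Rightarrow> good G yv \<sigma> k A c \<and> feasible k (pvec ps \<sigma> k) A \<pi> \<and> cost c \<pi> = 0
    | Answer_No \<Rightarrow> \<not> psat_satisfiable G yv ps k)"

locale psat_setup =
  fixes G :: "'a::finite pform set" and yv :: "nat \<Rightarrow> 'a" and ps :: "nat \<Rightarrow> real"
    and k :: nat and \<sigma> :: "nat \<Rightarrow> nat"
  assumes psb: "\<forall>i\<in>{1..k}. 0 < ps i \<and> ps i < 1"
    and sig: "bij_betw \<sigma> {1..k} {1..k}"
    and sorted: "\<forall>i j. 1 \<le> i \<and> i \<le> j \<and> j \<le> k \<longrightarrow> ps (\<sigma> j) \<le> ps (\<sigma> i)"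
begin

abbreviation "p \<equiv> pvec ps \<sigma> k"

lemma sig_in: "r \<in> {1..k} \<Longrightarrow> \<sigma> r \<in> {1..k}"
  using sig by (auto simp: bij_betw_def)

lemma p_dec: "i < k \<Longrightarrow> p ! Suc i \<le> p ! i"
proof (cases "i = 0")
  case True
  assume "i < k"
  then have "\<sigma> 1 \<in> {1..k}" using sig_in[of 1] by simp
  then have "ps (\<sigma> 1) < 1" using psb by blast
  then show ?thesis using True \<open>i < k\<close> by (simp add: pvec_nth pvec_nth0)
next
  case False
  assume "i < k"
  then show ?thesis using False sorted[rule_format, of i "Suc i"] by (simp add: pvec_nth)
qed

lemma p_k: "0 \<le> p ! k"
proof (cases "k = 0")
  case True then show ?thesis by (simp add: pvec_nth0)
next
  case False
  then have "\<sigma> k \<in> {1..k}" using sig_in[of k] by simp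
  then have "0 < ps (\<sigma> k)" using psb by blast
  then show ?thesis using False by (simp add: pvec_nth)
qed

lemma init_inv: "cg_inv G yv ps \<sigma> k (cg_init G yv ps \<sigma> k)"
proof -
  define A where "A = A_init k"
  have lenA: "length A = k + 1" by (simp add: A_def length_A_init)
  have colj: "is_column k (A ! j)" if "j < length A" for j
  proof -
    have "length (A ! j) = k + 1" using that lenA by (simp del: upt_Suc add: A_def A_init_def)
    then show ?thesis using that lenA by (auto simp: is_column_def A_def A_init_nth)
  qed
  have dist: "distinct A"
    unfolding distinct_conv_nth
  proof (intro allI impI)
    fix i j assume ij: "i < length A" "j < length A" "i \<noteq> j"
    show "A ! i \<noteq> A ! j"
    proof (cases "i < j")
      case True
      have "A ! i ! j = 0" "A ! j ! j = 1" using ij True lenA by (auto simp: A_def A_init_nth)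
      then show ?thesis by auto
    next
      case False
      then have "j < i" using ij by simp
      then have "A ! j ! i = 0" "A ! i ! i = 1" using ij lenA by (auto simp: A_def A_init_nth)
      then show ?thesis by auto
    qed
  qed
  have gd: "good G yv \<sigma> k A (c_init G yv \<sigma> k)"
    unfolding good_def using lenA colj dist
    by (auto simp: c_init_def A_def)
  define f where "f i = (if i \<le> k then p ! i else 0)" for i
  have pinth: "pi_init k p ! j = f j - f (Suc j)" if "j \<le> k" for j
    using that by (simp del: upt_Suc add: pi_init_def nth_upt less_Suc_eq_le f_def)
  have feas: "feasible k p A (pi_init k p)"
    unfolding feasible_def
  proof (intro conjI allI impI)
    show "length (pi_init k p) = length A" by (simp add: pi_init_def lenA)
    fix j assume "j < length A"
    then have j: "j \<le> k" using lenA by simp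
    show "0 \<le> pi_init k p ! j"
    proof (cases "j < k")
      case True then show ?thesis using pinth[OF j] p_dec[of j] by (simp add: f_def)
    next
      case False then show ?thesis using pinth[OF j] p_k j by (simp add: f_def)
    qed
  next
    fix r assume r: "r \<le> k"
    have "mat_vec A (pi_init k p) r = (\<Sum>j\<le>k. (f j - f (Suc j)) * (if r \<le> j then 1 else 0))"
      unfolding mat_vec_def lenA
      by (simp only: Suc_eq_plus1[symmetric] lessThan_Suc_atMost)
         (rule sum.cong, simp_all add: pinth A_def A_init_nth r)
    also have "\<dots> = f r - f (Suc k)" using r by (intro telescope01) simp
    also have "\<dots> = p ! r" using r by (simp add: f_def)
    finally show "mat_vec A (pi_init k p) r = p ! r" .
  qed
  show ?thesis using gd feas by (simp add: cg_inv_def cg_init_def A_def)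
qed


lemma step_inv:
  assumes st: "cg_step G yv ps \<sigma> k s t" and inv: "cg_inv G yv ps \<sigma> k s"
  shows "cg_inv G yv ps \<sigma> k t"
  using st
proof cases
  case (stop c \<pi> A)
  then have gd: "good G yv \<sigma> k A c" and fe: "feasible k p A \<pi>" using inv by (auto simp: cg_inv_def)
  have "0 \<le> cost c \<pi>"
    by (rule cost_nonneg) (use gd fe in \<open>auto simp: good_def feasible_def\<close>)
  then show ?thesis using stop gd fe by (simp add: cg_inv_def)
next
  case (opt_zero c \<pi> A B \<pi>1 z)
  then have gd: "good G yv \<sigma> k A c" using inv by (auto simp: cg_inv_def)
  have fe: "feasible k p A \<pi>1" using opt_zero(4) by (simp add: simplex_result_def is_bfs_def)
  have "0 \<le> cost c \<pi>1"
    by (rule cost_nonneg) (use gd fe in \<open>auto simp: good_def feasible_def\<close>)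
  then show ?thesis using opt_zero gd fe by (simp add: cg_inv_def)
next
  case (no c \<pi> A B \<pi>1 z)
  then have gd: "good G yv \<sigma> k A c" using inv by (auto simp: cg_inv_def)
  have "\<not> psat_satisfiable G yv ps k"
    by (rule unsat_from_no[OF gd no(4) no(5) no(6) sig])
  then show ?thesis using no by (simp add: cg_inv_def)
next
  case (add c \<pi> A B \<pi>1 z y l \<pi>2)
  then have gd: "good G yv \<sigma> k A c" using inv by (auto simp: cg_inv_def)
  have fe: "feasible k p (A @ [y]) \<pi>2" using add(10) by (simp add: is_bfs_def)
  have yA: "y \<notin> set A"
  proof
    assume "y \<in> set A"
    then obtain j where j: "j < length A" "A ! j = y" by (auto simp: in_set_conv_nth)
    have "c ! j = 0" using gd j add(7) by (simp add: good_def)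
    moreover have "\<forall>j<length A. dotk k z (A ! j) \<le> c ! j" using add(4) by (simp add: simplex_result_def)
    then have "dotk k z (A ! j) \<le> c ! j" using j(1) by blast
    ultimately show False using add(8) j by simp
  qed
  have "good G yv \<sigma> k (A @ [y]) (c @ [0])"
    unfolding good_def
  proof (intro conjI allI impI)
    show "k < length (A @ [y])" using gd by (simp add: good_def)
    show "distinct (A @ [y])" using gd yA by (simp add: good_def)
    show "length (c @ [0]) = length (A @ [y])" using gd by (simp add: good_def)
  next
    fix j assume "j \<le> k" then show "(A @ [y]) ! j = A_init k ! j" using gd by (simp add: good_def nth_append)
  next
    fix j assume "j < length (A @ [y])" then show "is_column k ((A @ [y]) ! j)"
      using gd add(6) by (cases "j < length A") (auto simp: good_def nth_append)
  next
    fix j assume j: "j < length (A @ [y])"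
    show "(c @ [0]) ! j = (if gamma_consistent G yv \<sigma> k ((A @ [y]) ! j) then 0 else 1)"
    proof (cases "j < length A")
      case True then show ?thesis using gd by (simp add: good_def nth_append)
    next
      case False
      then have "j = length A" "length c = length A" using j gd by (auto simp: good_def)
      then show ?thesis using add(7) by (simp add: nth_append)
    qed
  qed
  then show ?thesis using add fe by (simp add: cg_inv_def)
qed

lemma step_exists:
  assumes inv: "cg_inv G yv ps \<sigma> k (Running A c \<pi>)"
  shows "\<exists>t. cg_step G yv ps \<sigma> k (Running A c \<pi>) t"
proof (cases "0 < cost c \<pi>")
  case False then show ?thesis using cg_step.stop by blast
next
  case cpos: True
  have gd: "good G yv \<sigma> k A c" using inv by (simp add: cg_inv_def)
  interpret init_cols k A using gd by unfold_locales (auto simp: good_def)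
  have lc: "length c = length A" using gd by (simp add: good_def)
  have c0: "\<forall>j<length A. 0 \<le> c ! j" using good_c_nonneg[OF gd] .
  obtain B \<pi>1 z where sr: "simplex_result k p A c B \<pi>1 z"
    using lp_exists[OF lc c0] p_dec p_k by blast
  show ?thesis
  proof (cases "0 < cost c \<pi>1")
    case False then show ?thesis using cg_step.opt_zero[OF cpos sr] by blast
  next
    case c1: True
    show ?thesis
    proof (cases "\<exists>y. is_column k y \<and> gamma_consistent G yv \<sigma> k y \<and> dotk k z y > 0")
      case False then show ?thesis using cg_step.no[OF cpos sr c1] by blast
    next
      case True
      then obtain y where y: "is_column k y" "gamma_consistent G yv \<sigma> k y" "dotk k z y > 0" by blast
      obtain l \<pi>2 where l: "l \<le> k" "is_bfs k p (A @ [y]) (B[l := length A]) \<pi>2"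
        using add_pivot[OF sr lc c0 y(3)] by blast
      show ?thesis using cg_step.add[OF cpos sr c1 y l] by blast
    qed
  qed
qed

lemma reach_inv:
  assumes "(cg_step G yv ps \<sigma> k)\<^sup>*\<^sup>* (cg_init G yv ps \<sigma> k) s"
  shows "cg_inv G yv ps \<sigma> k s"
  using assms
proof (induction rule: rtranclp_induct)
  case base then show ?case by (rule init_inv)
next
  case (step y z) then show ?case using step_inv by blast
qed

lemma step_from_running: "cg_step G yv ps \<sigma> k s t \<Longrightarrow> \<exists>A c \<pi>. s = Running A c \<pi>"
  by (cases rule: cg_step.cases) auto

lemma step_running_len:
  "cg_step G yv ps \<sigma> k (Running A c \<pi>) (Running A' c' \<pi>') \<Longrightarrow> length A' = Suc (length A)"
  by (cases rule: cg_step.cases) auto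

lemma good_len_bound:
  assumes "good G yv \<sigma> k A c"
  shows "length A \<le> card {xs :: real list. set xs \<subseteq> {0, 1} \<and> length xs = k + 1}"
proof -
  define Cols where "Cols = {xs :: real list. set xs \<subseteq> {0, 1} \<and> length xs = k + 1}"
  have fin: "finite Cols" unfolding Cols_def using finite_lists_length_eq[of "{0::real, 1}" "k+1"] by simp
  have sub: "set A \<subseteq> Cols"
  proof
    fix a assume "a \<in> set A"
    then obtain j where j: "j < length A" "A ! j = a" by (auto simp: in_set_conv_nth)
    then have col: "is_column k a" using assms by (auto simp: good_def)
    then have "length a = k + 1" by (simp add: is_column_def)
    moreover have "set a \<subseteq> {0, 1}"
    proof
      fix x assume "x \<in> set a"
      then obtain r where r: "r < length a" "a ! r = x" by (auto simp: in_set_conv_nth)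
      then have "r \<le> k" using \<open>length a = k + 1\<close> by simp
      have "\<forall>r\<le>k. a ! r \<in> {0, 1}" using col by (simp add: is_column_def)
      then have "a ! r \<in> {0, 1}" using \<open>r \<le> k\<close> by blast
      then show "x \<in> {0, 1}" using r by simp
    qed
    ultimately show "a \<in> Cols" by (simp add: Cols_def)
  qed
  have "length A = card (set A)" using assms by (simp add: good_def distinct_card)
  also have "\<dots> \<le> card Cols" by (rule card_mono[OF fin sub])
  finally show ?thesis by (simp add: Cols_def)
qed

lemma no_infinite_run:
  "\<nexists>f. f 0 = cg_init G yv ps \<sigma> k \<and> (\<forall>n. cg_step G yv ps \<sigma> k (f n) (f (Suc n)))"
proof
  assume "\<exists>f. f 0 = cg_init G yv ps \<sigma> k \<and> (\<forall>n. cg_step G yv ps \<sigma> k (f n) (f (Suc n)))"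
  then obtain f where f0: "f 0 = cg_init G yv ps \<sigma> k" and fs: "\<forall>n. cg_step G yv ps \<sigma> k (f n) (f (Suc n))" by blast
  have inv: "cg_inv G yv ps \<sigma> k (f n)" for n
  proof (induction n)
    case 0 then show ?case using f0 init_inv by simp
  next
    case (Suc n) then show ?case using step_inv fs by blast
  qed
  have run: "\<exists>A c \<pi>. f n = Running A c \<pi> \<and> length A = k + 1 + n" for n
  proof (induction n)
    case 0 then show ?case using f0 by (simp add: cg_init_def length_A_init)
  next
    case (Suc n)
    then obtain A c \<pi> where fn: "f n = Running A c \<pi>" "length A = k + 1 + n" by blast
    obtain A' c' \<pi>' where fs': "f (Suc n) = Running A' c' \<pi>'" using step_from_running fs by blast
    have "length A' = Suc (length A)" using step_running_len fs[rule_format, of n] fn fs' by simp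
    then show ?case using fs' fn by simp
  qed
  define N where "N = card {xs :: real list. set xs \<subseteq> {0, 1} \<and> length xs = k + 1}"
  obtain A c \<pi> where fN: "f N = Running A c \<pi>" "length A = k + 1 + N" using run by blast
  have "good G yv \<sigma> k A c" using inv[of N] fN by (simp add: cg_inv_def)
  then have "length A \<le> N" unfolding N_def by (rule good_len_bound)
  then show False using fN by simp
qed

lemma main:
    "(\<nexists>f. f 0 = cg_init G yv ps \<sigma> k \<and> (\<forall>n. cg_step G yv ps \<sigma> k (f n) (f (Suc n))))
     \<and> (\<forall>s. (cg_step G yv ps \<sigma> k)\<^sup>*\<^sup>* (cg_init G yv ps \<sigma> k) s
            \<longrightarrow> cg_final s \<or> (\<exists>t. cg_step G yv ps \<sigma> k s t))
     \<and> (\<forall>s. (cg_step G yv ps \<sigma> k)\<^sup>*\<^sup>* (cg_init G yv ps \<sigma> k) s \<and> cg_final s \<longrightarrow>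
          (psat_satisfiable G yv ps k \<longrightarrow>
             (\<exists>A c \<pi>. s = Returned A c \<pi> \<and> feasible k (pvec ps \<sigma> k) A \<pi> \<and> cost c \<pi> = 0))
        \<and> (\<not> psat_satisfiable G yv ps k \<longrightarrow> s = Answer_No))"
proof (intro conjI allI impI)
  show "\<nexists>f. f 0 = cg_init G yv ps \<sigma> k \<and> (\<forall>n. cg_step G yv ps \<sigma> k (f n) (f (Suc n)))"
    by (rule no_infinite_run)
next
  fix s assume r: "(cg_step G yv ps \<sigma> k)\<^sup>*\<^sup>* (cg_init G yv ps \<sigma> k) s"
  show "cg_final s \<or> (\<exists>t. cg_step G yv ps \<sigma> k s t)"
  proof (cases s)
    case (Running A c \<pi>)
    then show ?thesis using step_exists reach_inv[OF r] by blast
  qed (simp_all add: cg_final_def)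
next
  fix s assume h: "(cg_step G yv ps \<sigma> k)\<^sup>*\<^sup>* (cg_init G yv ps \<sigma> k) s \<and> cg_final s"
    and sat: "psat_satisfiable G yv ps k"
  have inv: "cg_inv G yv ps \<sigma> k s" using h reach_inv by blast
  show "\<exists>A c \<pi>. s = Returned A c \<pi> \<and> feasible k (pvec ps \<sigma> k) A \<pi> \<and> cost c \<pi> = 0"
  proof (cases s)
    case (Running A c \<pi>) then show ?thesis using h by (simp add: cg_final_def)
  next
    case (Returned A c \<pi>) then show ?thesis using inv by (simp add: cg_inv_def)
  next
    case Answer_No then show ?thesis using inv sat by (simp add: cg_inv_def)
  qed
next
  fix s assume h: "(cg_step G yv ps \<sigma> k)\<^sup>*\<^sup>* (cg_init G yv ps \<sigma> k) s \<and> cg_final s"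
    and unsat: "\<not> psat_satisfiable G yv ps k"
  have inv: "cg_inv G yv ps \<sigma> k s" using h reach_inv by blast
  show "s = Answer_No"
  proof (cases s)
    case (Running A c \<pi>) then show ?thesis using h by (simp add: cg_final_def)
  next
    case (Returned A c \<pi>)
    then have "good G yv \<sigma> k A c" "feasible k p A \<pi>" "cost c \<pi> = 0" using inv by (auto simp: cg_inv_def)
    then have "psat_satisfiable G yv ps k" using sat_from_solution sig by blast
    then show ?thesis using unsat by simp
  next
    case Answer_No then show ?thesis .
  qed
qed

end


theorem theorem1:
  fixes G :: "'a::finite pform set" and yv :: "nat \<Rightarrow> 'a" and ps :: "nat \<Rightarrow> real"
    and k :: nat and \<sigma> :: "nat \<Rightarrow> nat"
  assumes "finite G"
    and "\<forall>i\<in>{1..k}. 0 < ps i \<and> ps i < 1"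
    and "bij_betw \<sigma> {1..k} {1..k}"
    and "\<forall>i j. 1 \<le> i \<and> i \<le> j \<and> j \<le> k \<longrightarrow> ps (\<sigma> j) \<le> ps (\<sigma> i)"
  shows
    \<comment> \<open>termination: no infinite run\<close>
    "(\<nexists>f. f 0 = cg_init G yv ps \<sigma> k \<and> (\<forall>n. cg_step G yv ps \<sigma> k (f n) (f (Suc n))))
     \<comment> \<open>no run gets stuck before returning\<close>
     \<and> (\<forall>s. (cg_step G yv ps \<sigma> k)\<^sup>*\<^sup>* (cg_init G yv ps \<sigma> k) s
            \<longrightarrow> cg_final s \<or> (\<exists>t. cg_step G yv ps \<sigma> k s t))
     \<comment> \<open>correctness of every returned answer\<close>
     \<and> (\<forall>s. (cg_step G yv ps \<sigma> k)\<^sup>*\<^sup>* (cg_init G yv ps \<sigma> k) s \<and> cg_final s \<longrightarrow>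
          (psat_satisfiable G yv ps k \<longrightarrow>
             (\<exists>A c \<pi>. s = Returned A c \<pi> \<and> feasible k (pvec ps \<sigma> k) A \<pi> \<and> cost c \<pi> = 0))
        \<and> (\<not> psat_satisfiable G yv ps k \<longrightarrow> s = Answer_No))"
  proof -
  interpret psat_setup G yv ps k \<sigma>
    using assms(2,3,4) by unfold_locales auto
  show ?thesis by (rule main)
qed

end
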